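(* Let $d\ge1$, $0<s<1$, $1\le q<\infty$, $p\ge 1$, and let $\gamma\in\mathbb{R}$. Let $u:\mathbb{R}^d\to\mathbb{R}$ be measurable with $\int_{\mathbb{R}^d}|u(x)|^q|x|^{\gamma-d}\,dx<\infty$. Then for every $t\in(0,\infty)\setminus\{1\}$, $$\int_{0}^{\infty}\int_{\mathbb{S}^{d-1}}\int_{\mathbb{S}^{d-1}}r^{\gamma-1}\frac{|u(r\omega)-u(rt\sigma)|^q}{|\omega-t\sigma|^{d+sp}}\,d\sigma\,d\omega\,dr\geq\left|1-t^{-\gamma/q}\right|^q\Phi(t)\int_{\mathbb{R}^d}|u(x)|^q|x|^{\gamma-d}\,dx,$$ where $\Phi(t)=\int_{\mathbb{S}^{d-1}}|e_d-t\sigma|^{-d-sp}\,d\sigma$.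
   Context: $\mathbb{S}^{d-1}$ is the unit sphere of $\mathbb{R}^d$ with surface measure $d\sigma$ (counting measure on $\{\pm1\}$ if $d=1$), and $e_d=(0,\dots,0,1)$. By rotation invariance $\Phi(t)=\int_{\mathbb{S}^{d-1}}|\omega-t\sigma|^{-d-sp}\,d\sigma$ for every $\omega\in\mathbb{S}^{d-1}$, and $\Phi(t)<\infty$ for $t\neq 1$. *)

theory Defs
  imports "HOL-Analysis.Analysis"
begin

text \<open>Surface measure on the unit sphere of a Euclidean space, defined via the cone
  construction: sigma(A) = d * lambda({x : 0 < norm x < 1, x / norm x in A}),
  i.e. the push-forward of d times Lebesgue measure on the punctured unit ball
  under the radial projection x / norm x.  It is concentrated on sphere 0 1.
  For d = 1 this is the counting measure on the two points of the sphere.\<close>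
definition sphere_measure :: "'a::euclidean_space measure" where
  "sphere_measure =
     distr (density lborel (\<lambda>x. of_nat DIM('a) * indicator (ball 0 1 - {0}) x))
           borel (\<lambda>x. x /\<^sub>R norm x)"

definition Phi :: "'a::euclidean_space \<Rightarrow> real \<Rightarrow> real \<Rightarrow> real \<Rightarrow> ennreal" where
  "Phi e s p t =
     (\<integral>\<^sup>+ \<sigma>. ennreal (norm (e - t *\<^sub>R \<sigma>) powr (- (real DIM('a) + s * p))) \<partial>sphere_measure)"

end

theory Submission
  imports Defs "HOL-Analysis.Analysis"
begin

lemma sets_S[measurable_cong, simp]: "sets (sphere_measure :: 'a::euclidean_space measure) = sets borel"
  by (simp add: sphere_measure_def)

lemma space_S[simp]: "space (sphere_measure :: 'a::euclidean_space measure) = UNIV"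
  by (simp add: sphere_measure_def)

lemma B0_borel[measurable]: "(ball (0::'a::euclidean_space) 1 - {0}) \<in> sets borel"
  by (intro borel_open open_Diff) auto

lemma proj_meas[measurable]: "(\<lambda>x::'a::euclidean_space. x /\<^sub>R norm x) \<in> borel_measurable borel"
  by measurable

lemma S_integral:
  fixes F :: "'a::euclidean_space \<Rightarrow> ennreal"
  assumes [measurable]: "F \<in> borel_measurable borel"
  shows "(\<integral>\<^sup>+\<sigma>. F \<sigma> \<partial>sphere_measure) =
     (\<integral>\<^sup>+x. of_nat DIM('a) * indicator (ball 0 1 - {0}) x * F (x /\<^sub>R norm x) \<partial>lborel)"
  unfolding sphere_measure_def
  by (subst nn_integral_distr, simp, simp, subst nn_integral_density) (simp_all add: mult.assoc)

lemma emeasure_S_UNIV: "emeasure (sphere_measure :: 'a::euclidean_space measure) UNIV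
   = of_nat DIM('a) * emeasure lborel (ball (0::'a) 1 - {0})"
proof -
  have "emeasure (sphere_measure :: 'a measure) UNIV = (\<integral>\<^sup>+\<sigma>. 1 \<partial>(sphere_measure :: 'a measure))"
    by simp
  also have "\<dots> = (\<integral>\<^sup>+x. of_nat DIM('a) * indicator (ball (0::'a) 1 - {0}) x \<partial>lborel)"
    by (subst S_integral) (auto simp: borel_measurable_indicator)
  also have "\<dots> = of_nat DIM('a) * emeasure lborel (ball (0::'a) 1 - {0})"
    by (subst nn_integral_cmult) (auto simp: borel_measurable_indicator)
  finally show ?thesis .
qed

lemma finite_S: "finite_measure (sphere_measure :: 'a::euclidean_space measure)"
proof
  have "emeasure lborel (ball (0::'a) 1 - {0}) \<le> emeasure lborel (ball (0::'a) 1)"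
    by (intro emeasure_mono) auto
  also have "\<dots> < \<infinity>" using emeasure_bounded_finite[of "ball (0::'a) 1"] by (simp add: less_top)
  finally show "emeasure (sphere_measure :: 'a measure) (space sphere_measure) \<noteq> \<infinity>"
    by (simp add: emeasure_S_UNIV ennreal_mult_eq_top_iff)
qed

interpretation S: finite_measure "sphere_measure :: 'a::euclidean_space measure"
  by (rule finite_S)

lemma AE_S_unit: "AE \<sigma> in (sphere_measure :: 'a::euclidean_space measure). norm \<sigma> = 1"
proof -
  have "(\<integral>\<^sup>+\<sigma>. indicator {\<sigma>::'a. norm \<sigma> \<noteq> 1} \<sigma> \<partial>sphere_measure) = 0"
  proof (subst S_integral)
    show "indicator {\<sigma>::'a. norm \<sigma> \<noteq> 1} \<in> borel_measurable borel" by measurable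
    have "\<And>x::'a. of_nat DIM('a) * indicator (ball 0 1 - {0}) x * indicator {\<sigma>::'a. norm \<sigma> \<noteq> 1} (x /\<^sub>R norm x) = (0::ennreal)"
      by (auto simp: indicator_def field_simps)
    then show "(\<integral>\<^sup>+x. of_nat DIM('a) * indicator (ball 0 1 - {0}) x * indicator {\<sigma>::'a. norm \<sigma> \<noteq> 1} (x /\<^sub>R norm x) \<partial>lborel) = 0"
      by (simp del: mult_eq_0_iff)
  qed
  then have "AE \<sigma> in (sphere_measure :: 'a measure). indicator {\<sigma>::'a. norm \<sigma> \<noteq> 1} \<sigma> = (0::ennreal)"
    by (subst (asm) nn_integral_0_iff_AE) auto
  then show ?thesis by (auto simp: indicator_def)
qed

lemma tail_integral:
  fixes a n :: real
  assumes "0 < a" "1 \<le> n"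
  shows "(\<integral>\<^sup>+l. (if a < l then ennreal (l powr (-n-1)) else 0) \<partial>lborel) = ennreal (a powr (-n) / n)"
proof -
  have hi: "((\<lambda>x. x powr (-n-1)) has_integral -(a powr ((-n-1)+1)) / ((-n-1)+1)) {a..}"
    by (rule has_integral_powr_to_inf) (use assms in auto)
  have "(\<integral>\<^sup>+l. ennreal (l powr (-n-1)) * indicator {a..} l \<partial>lborel) = ennreal (-(a powr ((-n-1)+1)) / ((-n-1)+1))"
    by (rule nn_integral_has_integral_lebesgue'[OF _ hi]) auto
  also have "-(a powr ((-n-1)+1)) / ((-n-1)+1) = a powr (-n) / n"
    using assms by (simp add: field_simps)
  also have "(\<integral>\<^sup>+l. ennreal (l powr (-n-1)) * indicator {a..} l \<partial>lborel) = 
     (\<integral>\<^sup>+l. (if a < l then ennreal (l powr (-n-1)) else 0) \<partial>lborel)"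
    by (intro nn_integral_cong_AE eventually_mono[OF AE_lborel_singleton[of a]]) (auto simp: indicator_def)
  finally show ?thesis .
qed

lemma scale_nn:
  fixes f :: "'a::euclidean_space \<Rightarrow> ennreal" and c :: real
  assumes [measurable]: "f \<in> borel_measurable borel" and c: "c \<noteq> 0"
  shows "(\<integral>\<^sup>+x. f x \<partial>lborel) = ennreal (\<bar>c\<bar> ^ DIM('a)) * (\<integral>\<^sup>+y. f (c *\<^sub>R y) \<partial>lborel)"
proof -
  have "(\<integral>\<^sup>+x. f x \<partial>(lborel::'a measure)) =
     (\<integral>\<^sup>+x. f x \<partial>density (distr lborel borel (\<lambda>x. 0 + c *\<^sub>R x)) (\<lambda>_. \<bar>c\<bar>^DIM('a)))"
    using lborel_affine[OF c, of "0::'a"] by simp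
  also have "\<dots> = (\<integral>\<^sup>+y. ennreal (\<bar>c\<bar> ^ DIM('a)) * f (c *\<^sub>R y) \<partial>lborel)"
    by (subst nn_integral_density) (simp_all add: nn_integral_distr)
  also have "\<dots> = ennreal (\<bar>c\<bar> ^ DIM('a)) * (\<integral>\<^sup>+y. f (c *\<^sub>R y) \<partial>lborel)"
    by (rule nn_integral_cmult) simp
  finally show ?thesis .
qed

lemma polar:
  fixes F :: "'a::euclidean_space \<Rightarrow> ennreal"
  assumes [measurable]: "F \<in> borel_measurable borel"
  shows "(\<integral>\<^sup>+r. indicator {0<..} r * ennreal (r powr (real DIM('a) - 1)) *
            (\<integral>\<^sup>+\<omega>. F (r *\<^sub>R \<omega>) \<partial>sphere_measure) \<partial>lborel) = (\<integral>\<^sup>+x. F x \<partial>lborel)"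
proof -
  define n where "n = real DIM('a)"
  have n1: "1 \<le> n" unfolding n_def using DIM_positive[where 'a='a] by linarith
  define B where "B = ball (0::'a) 1 - {0}"
  have [measurable]: "B \<in> sets borel" unfolding B_def by measurable
  define G where "G x r = (if 0 < r then ennreal (r powr (n-1)) else 0) *
      (of_nat DIM('a) * indicator B x * F (r *\<^sub>R (x /\<^sub>R norm x)))" for x :: 'a and r :: real
  define H where "H x l = (if 0 < l then ennreal (l powr (n-1)) else 0) *
      (of_nat DIM('a) * indicator B x * ennreal (norm x powr n) * F (l *\<^sub>R x))" for x :: 'a and l :: real
  define K where "K l y = (if norm y < l then ennreal (l powr (-n-1)) else 0) *
      (of_nat DIM('a) * indicator (-{0}) y * ennreal (norm y powr n) * F y)" for y :: 'a and l :: real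
  have mG: "case_prod G \<in> borel_measurable (lborel \<Otimes>\<^sub>M lborel)"
    unfolding G_def by measurable
  have mH: "case_prod H \<in> borel_measurable (lborel \<Otimes>\<^sub>M lborel)"
    unfolding H_def by measurable
  have mK: "(\<lambda>(y,l). K l y) \<in> borel_measurable (lborel \<Otimes>\<^sub>M lborel)"
    unfolding K_def by measurable
  have step1: "(\<integral>\<^sup>+r. indicator {0<..} r * ennreal (r powr (real DIM('a) - 1)) *
            (\<integral>\<^sup>+\<omega>. F (r *\<^sub>R \<omega>) \<partial>sphere_measure) \<partial>lborel) = (\<integral>\<^sup>+r. \<integral>\<^sup>+x. G x r \<partial>lborel \<partial>lborel)"
  proof (rule nn_integral_cong)
    fix r :: real
    have "(\<integral>\<^sup>+\<omega>. F (r *\<^sub>R \<omega>) \<partial>sphere_measure) = 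
      (\<integral>\<^sup>+x. of_nat DIM('a) * indicator B x * F (r *\<^sub>R (x /\<^sub>R norm x)) \<partial>lborel)"
      unfolding B_def by (rule S_integral) measurable
    then show "indicator {0<..} r * ennreal (r powr (real DIM('a) - 1)) *
            (\<integral>\<^sup>+\<omega>. F (r *\<^sub>R \<omega>) \<partial>sphere_measure) = (\<integral>\<^sup>+x. G x r \<partial>lborel)"
      unfolding G_def n_def
      by (subst nn_integral_cmult) (auto simp: indicator_def)
  qed
  have step2: "(\<integral>\<^sup>+r. \<integral>\<^sup>+x. G x r \<partial>lborel \<partial>lborel) = (\<integral>\<^sup>+x. \<integral>\<^sup>+r. G x r \<partial>lborel \<partial>lborel)"
    by (rule lborel_pair.Fubini'[OF mG])
  have step3: "(\<integral>\<^sup>+r. G x r \<partial>lborel) = (\<integral>\<^sup>+l. H x l \<partial>lborel)" for x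
  proof (cases "x \<in> B")
    case False
    then show ?thesis unfolding G_def H_def by simp
  next
    case True
    define c where "c = norm x"
    have c: "0 < c" using True unfolding B_def c_def by auto
    have [measurable]: "G x \<in> borel_measurable borel" unfolding G_def by measurable
    have "(\<integral>\<^sup>+r. G x r \<partial>lborel) = ennreal \<bar>c\<bar> * (\<integral>\<^sup>+l. G x (0 + c * l) \<partial>lborel)"
      by (rule nn_integral_real_affine) (use c in auto)
    also have "\<dots> = (\<integral>\<^sup>+l. ennreal c * G x (c * l) \<partial>lborel)"
      using c by (subst nn_integral_cmult) auto
    also have "\<dots> = (\<integral>\<^sup>+l. H x l \<partial>lborel)"
    proof (rule nn_integral_cong)
      fix l :: real
      have e1: "(c * l) *\<^sub>R (x /\<^sub>R norm x) = l *\<^sub>R x" using c unfolding c_def by simp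
      show "ennreal c * G x (c * l) = H x l"
      proof (cases "0 < l")
        case True
        have "c * (c * l) powr (n - 1) = c powr n * l powr (n - 1)"
          using c True by (simp add: powr_mult powr_diff field_simps)
        then have "ennreal c * ennreal ((c * l) powr (n - 1)) = ennreal (c powr n) * ennreal (l powr (n - 1))"
          using c True by (simp add: ennreal_mult'[symmetric] ennreal_mult[symmetric])
        then have eq: "ennreal c * ennreal ((c * l) powr (n - 1)) * (of_nat DIM('a) * indicator B x * F (l *\<^sub>R x))
           = ennreal (l powr (n-1)) * (of_nat DIM('a) * indicator B x * ennreal (c powr n) * F (l *\<^sub>R x))"
          by (simp add: ac_simps)
        have "G x (c * l) = ennreal ((c * l) powr (n - 1)) * (of_nat DIM('a) * indicator B x * F (l *\<^sub>R x))"
        proof -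
          have cl: "(0 < c * l) = True" using True c by simp
          show ?thesis unfolding G_def by (simp only: cl if_True e1)
        qed
        then show ?thesis unfolding H_def using True c eq
          by (simp add: c_def[symmetric] mult.assoc)
      next
        case False
        then show ?thesis unfolding G_def H_def using c by (simp add: zero_less_mult_iff)
      qed
    qed
    finally show ?thesis .
  qed
  have step4: "(\<integral>\<^sup>+l. \<integral>\<^sup>+x. H x l \<partial>lborel \<partial>lborel) = (\<integral>\<^sup>+x. \<integral>\<^sup>+l. H x l \<partial>lborel \<partial>lborel)"
    by (rule lborel_pair.Fubini'[OF mH])
  have step5: "(\<integral>\<^sup>+x. H x l \<partial>lborel) = (\<integral>\<^sup>+y. K l y \<partial>lborel)" for l
  proof (cases "0 < l")
    case False
    have "\<not> norm y < l" for y :: 'a using False norm_ge_zero[of y] by linarith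
    then have "\<And>y::'a. K l y = 0" unfolding K_def by simp
    then show ?thesis unfolding H_def using False by simp
  next
    case True
    define c where "c = 1 / l"
    have c: "0 < c" using True unfolding c_def by auto
    have mHl: "(\<lambda>x. H x l) \<in> borel_measurable borel" unfolding H_def by measurable
    have "(\<integral>\<^sup>+x. H x l \<partial>lborel) = ennreal (\<bar>c\<bar> ^ DIM('a)) * (\<integral>\<^sup>+y. H (c *\<^sub>R y) l \<partial>lborel)"
      using c by (intro scale_nn[OF mHl]) simp
    also have "\<dots> = (\<integral>\<^sup>+y. ennreal (c ^ DIM('a)) * H (c *\<^sub>R y) l \<partial>lborel)"
    proof -
      have "(\<lambda>y. H (c *\<^sub>R y) l) \<in> borel_measurable borel" unfolding H_def by measurable
      then show ?thesis using c by (subst nn_integral_cmult) simp_all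
    qed
    also have "\<dots> = (\<integral>\<^sup>+y. K l y \<partial>lborel)"
    proof (rule nn_integral_cong)
      fix y :: 'a
      have e1: "l *\<^sub>R (c *\<^sub>R y) = y" using True unfolding c_def by simp
      have e2: "c *\<^sub>R y \<in> B \<longleftrightarrow> (norm y < l \<and> y \<in> -{0})"
      proof -
        have "norm (c *\<^sub>R y) = norm y / l" using True unfolding c_def by simp
        moreover have "c *\<^sub>R y = 0 \<longleftrightarrow> y = 0" using c by simp
        ultimately have "c *\<^sub>R y \<in> B \<longleftrightarrow> norm y / l < 1 \<and> y \<noteq> 0" unfolding B_def by simp
        then show ?thesis using True by (simp add: divide_less_eq)
      qed
      have e3: "c ^ DIM('a) * (l powr (n - 1) * (norm (c *\<^sub>R y) powr n)) = l powr (-n-1) * norm y powr n"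
      proof -
        have "c ^ DIM('a) = l powr (-n)" unfolding c_def n_def using True
          by (simp add: powr_realpow[symmetric] powr_minus_divide powr_divide)
        moreover have "norm (c *\<^sub>R y) powr n = l powr (-n) * norm y powr n"
          using True c unfolding c_def by (simp add: powr_mult powr_minus_divide powr_divide)
        ultimately have "c ^ DIM('a) * (l powr (n - 1) * (norm (c *\<^sub>R y) powr n)) =
            (l powr (-n) * l powr (n-1) * l powr (-n)) * norm y powr n"
          by (simp only: mult_ac)
        also have "l powr (-n) * l powr (n-1) * l powr (-n) = l powr (-n-1)"
          using True by (simp add: powr_add[symmetric] powr_diff)
        finally show ?thesis .
      qed
      show "ennreal (c ^ DIM('a)) * H (c *\<^sub>R y) l = K l y"
      proof (cases "norm y < l \<and> y \<in> -{0}")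
        case yes: True
        have i1: "indicator B (c *\<^sub>R y) = (1::ennreal)" using yes e2 by simp
        have i2: "indicator (-{0}) y = (1::ennreal)" using yes by simp
        have m: "ennreal (c ^ DIM('a)) * ennreal (l powr (n - 1)) * ennreal (norm (c *\<^sub>R y) powr n)
            = ennreal (l powr (-n-1)) * ennreal (norm y powr n)"
          using e3 c by (simp add: ennreal_mult'[symmetric] ennreal_mult[symmetric] mult.assoc)
        have "ennreal (c ^ DIM('a)) * H (c *\<^sub>R y) l = 
           (ennreal (c ^ DIM('a)) * ennreal (l powr (n - 1)) * ennreal (norm (c *\<^sub>R y) powr n)) * (of_nat DIM('a) * F y)"
          unfolding H_def using True by (simp only: i1 e1 if_True) (simp add: ac_simps)
        also have "\<dots> = K l y"
          unfolding K_def m using yes by (simp only: i2 if_True) (simp add: ac_simps)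
        finally show ?thesis .
      next
        case no: False
        have i1: "indicator B (c *\<^sub>R y) = (0::ennreal)" using no e2 by simp
        have "K l y = 0" unfolding K_def using no by auto
        then show ?thesis unfolding H_def by (simp only: i1) simp
      qed
    qed
    finally show ?thesis .
  qed
  have step6: "(\<integral>\<^sup>+l. \<integral>\<^sup>+y. K l y \<partial>lborel \<partial>lborel) = (\<integral>\<^sup>+y. \<integral>\<^sup>+l. K l y \<partial>lborel \<partial>lborel)"
    using lborel_pair.Fubini'[of "\<lambda>y l. K l y", OF mK] by simp
  have step7: "(\<integral>\<^sup>+l. K l y \<partial>lborel) = indicator (-{0}) y * F y" for y
  proof (cases "y = 0")
    case True
    then show ?thesis unfolding K_def by simp
  next
    case False
    have "(\<integral>\<^sup>+l. K l y \<partial>lborel) = (\<integral>\<^sup>+l. (if norm y < l then ennreal (l powr (-n-1)) else 0) \<partial>lborel) *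
      (of_nat DIM('a) * indicator (-{0}) y * ennreal (norm y powr n) * F y)"
      unfolding K_def by (rule nn_integral_multc) measurable
    also have "\<dots> = ennreal (norm y powr (-n) / n) * (of_nat DIM('a) * ennreal (norm y powr n) * F y)"
      using False n1 by (subst tail_integral) auto
    also have "\<dots> = F y"
    proof -
      have "norm y powr (-n) / n * n * norm y powr n = 1"
        using False n1 by (simp add: powr_minus field_simps)
      then have "ennreal (norm y powr (-n) / n) * (of_nat DIM('a) * ennreal (norm y powr n)) = 1"
        using n1 unfolding n_def
        by (simp add: ennreal_of_nat_eq_real_of_nat ennreal_mult'[symmetric] ennreal_mult[symmetric] mult_ac)
      then show ?thesis by (simp add: mult.assoc[symmetric])
    qed
    finally show ?thesis using False by simp
  qed
  have step8: "(\<integral>\<^sup>+y. indicator (-{0}) y * F y \<partial>lborel) = (\<integral>\<^sup>+y. F y \<partial>lborel)"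
    by (intro nn_integral_cong_AE eventually_mono[OF AE_lborel_singleton[of 0]]) (auto simp: indicator_def)
  have "(\<integral>\<^sup>+x. \<integral>\<^sup>+r. G x r \<partial>lborel \<partial>lborel) = (\<integral>\<^sup>+x. \<integral>\<^sup>+l. H x l \<partial>lborel \<partial>lborel)"
    by (rule nn_integral_cong, rule step3)
  also have "\<dots> = (\<integral>\<^sup>+l. \<integral>\<^sup>+x. H x l \<partial>lborel \<partial>lborel)" using step4 by (rule sym)
  also have "\<dots> = (\<integral>\<^sup>+l. \<integral>\<^sup>+y. K l y \<partial>lborel \<partial>lborel)"
    by (rule nn_integral_cong, rule step5)
  also have "\<dots> = (\<integral>\<^sup>+y. \<integral>\<^sup>+l. K l y \<partial>lborel \<partial>lborel)" by (rule step6)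
  also have "\<dots> = (\<integral>\<^sup>+y. indicator (-{0}) y * F y \<partial>lborel)"
    by (rule nn_integral_cong, rule step7)
  also have "\<dots> = (\<integral>\<^sup>+y. F y \<partial>lborel)" by (rule step8)
  finally show ?thesis using step1 step2 by (simp only:)
qed

lemma ball_measure_shift: "emeasure lborel (ball (x::'a::euclidean_space) r) = emeasure lborel (ball (0::'a) r)"
proof -
  have "emeasure lborel (ball (0::'a) r) = emeasure (distr lborel borel ((+) (-x))) (ball (0::'a) r)"
    by (simp add: lborel_distr_plus)
  also have "\<dots> = emeasure lborel ((+) (-x) -` ball 0 r)"
    by (subst emeasure_distr) auto
  also have "(+) (-x) -` ball 0 r = ball x r"
    by (auto simp: dist_norm norm_minus_commute)
  finally show ?thesis by simp
qed

lemma iso_open: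
  fixes T :: "'a::euclidean_space \<Rightarrow> 'a"
  assumes lin: "linear T" and iso: "\<And>x. norm (T x) = norm x" and sj: "surj T" and U: "open U"
  shows "emeasure lborel (T -` U) = emeasure lborel U"
proof -
  have contT: "continuous_on UNIV T" using lin by (simp add: linear_continuous_on linear_conv_bounded_linear)
  have Tmeas[measurable]: "T \<in> borel_measurable borel"
    using contT by (rule borel_measurable_continuous_onI)
  define S where "S = inv T"
  have TS: "T (S y) = y" for y unfolding S_def using sj by (simp add: surj_f_inv_f)
  have Tdist: "norm (T x - T y) = norm (x - y)" for x y
    using iso[of "x - y"] lin by (simp add: linear_diff)
  have Sdist: "norm (S x - S y) = norm (x - y)" for x y
    using Tdist[of "S x" "S y"] by (simp add: TS)
  let ?K = "{(x::'a, \<rho>::real). ball x \<rho> \<subseteq> U}"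
  have cov: "\<exists>i. i \<in> ?K \<and> x \<in> ball (fst i) (snd i) \<and> snd i < d" if "x \<in> U" "0 < d" for x d
  proof -
    have "\<forall>x\<in>U. \<exists>e>0. ball x e \<subseteq> U" using open_contains_ball[THEN iffD1, OF U] .
    from bspec[OF this that(1)] obtain e where e0: "0 < e \<and> ball x e \<subseteq> U" by (rule exE)
    then have e: "0 < e" "ball x e \<subseteq> U" by auto
    have pos: "0 < min e d / 2" using e(1) that(2) by simp
    have "ball x (min e d / 2) \<subseteq> ball x e" by (rule subset_ball) (use e(1) in \<open>simp add: min_def\<close>)
    then have "(x, min e d / 2) \<in> ?K" using e(2) by simp
    moreover have "x \<in> ball (fst (x, min e d / 2)) (snd (x, min e d / 2))" using pos by simp
    moreover have "snd (x, min e d / 2) < d" using that(2) by simp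
    ultimately show ?thesis by blast
  qed
  obtain C where C: "countable C" "C \<subseteq> ?K"
    and pw: "pairwise (\<lambda>i j. disjnt (ball (fst i) (snd i)) (ball (fst j) (snd j))) C"
    and neg: "negligible (U - (\<Union>i\<in>C. ball (fst i) (snd i)))"
    by (rule Vitali_covering_theorem_balls[of U ?K fst snd, OF cov])
  define V where "V = (\<Union>i\<in>C. ball (fst i) (snd i))"
  have VU: "V \<subseteq> U" unfolding V_def
  proof (rule UN_least)
    fix i assume "i \<in> C"
    then have "i \<in> ?K" using C(2) by (rule rev_subsetD)
    then show "ball (fst i) (snd i) \<subseteq> U" by (cases i) simp
  qed
  have disj: "disjoint_family_on (\<lambda>i. ball (fst i) (snd i)) C"
    using pw by (auto simp: pairwise_def disjoint_family_on_def disjnt_def)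
  have Vopen: "open V" unfolding V_def by auto
  define Z where "Z = U - V"
  have Zb[measurable]: "Z \<in> sets borel" unfolding Z_def using U Vopen by auto
  have Zl: "Z \<in> null_sets lebesgue"
    using neg unfolding Z_def V_def negligible_iff_null_sets .
  have Zbl: "Z \<in> sets lborel" using Zb by simp
  have Zn: "Z \<in> null_sets lborel"
    using iffD1[OF null_sets_completion_iff[OF Zbl] Zl] .
  have "T -` Z = S ` Z"
  proof
    show "T -` Z \<subseteq> S ` Z"
    proof
      fix x assume "x \<in> T -` Z"
      moreover have "norm (S (T x) - x) = 0" using Tdist[of "S (T x)" x] TS[of "T x"] by simp
      then have "S (T x) = x" by simp
      ultimately show "x \<in> S ` Z" by (metis image_eqI vimageD)
    qed
    show "S ` Z \<subseteq> T -` Z"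
    proof
      fix x assume "x \<in> S ` Z"
      then obtain z where "z \<in> Z" "x = S z" by blast
      then show "x \<in> T -` Z" using TS[of z] by simp
    qed
  qed
  moreover have "negligible (S ` Z)"
  proof (rule negligible_locally_Lipschitz_image)
    show "negligible Z" using Zl unfolding negligible_iff_null_sets .
    show "\<exists>T B. open T \<and> x \<in> T \<and> (\<forall>y\<in>Z \<inter> T. norm (S y - S x) \<le> B * norm (y - x))" for x
      by (rule exI[of _ UNIV], rule exI[of _ 1]) (simp add: Sdist)
  qed simp
  ultimately have TZl: "T -` Z \<in> null_sets lebesgue"
    by (simp add: negligible_iff_null_sets)
  have TZb: "T -` Z \<in> sets lborel" using measurable_sets[OF Tmeas Zb] by simp
  have TZn: "T -` Z \<in> null_sets lborel"
    using iffD1[OF null_sets_completion_iff[OF TZb] TZl] .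
  have ballpre: "T -` ball y r = ball (S y) r" for y r
  proof -
    have "T -` ball y r = {x. norm (T x - T (S y)) < r}" by (auto simp: TS dist_norm norm_minus_commute)
    also have "\<dots> = ball (S y) r" by (auto simp: Tdist dist_norm norm_minus_commute)
    finally show ?thesis .
  qed
  have "emeasure lborel U = emeasure lborel (V \<union> Z)"
    using VU unfolding Z_def by (simp add: Un_absorb1 Un_Diff_cancel)
  also have "\<dots> = emeasure lborel V"
    using Zn Vopen by (subst emeasure_Un_null_set) auto
  also have "\<dots> = (\<integral>\<^sup>+i. emeasure lborel (ball (fst i) (snd i)) \<partial>count_space C)"
    unfolding V_def by (rule emeasure_UN_countable) (use C disj in auto)
  also have "\<dots> = (\<integral>\<^sup>+i. emeasure lborel (T -` ball (fst i) (snd i)) \<partial>count_space C)"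
    by (simp add: ballpre ball_measure_shift[of "S _"] ball_measure_shift[of "fst _"])
  also have "\<dots> = emeasure lborel (\<Union>i\<in>C. T -` ball (fst i) (snd i))"
  proof (rule emeasure_UN_countable[symmetric])
    show "countable C" using C(1) .
    show "T -` ball (fst i) (snd i) \<in> sets lborel" for i by (simp add: ballpre)
    show "disjoint_family_on (\<lambda>i. T -` ball (fst i) (snd i)) C"
      unfolding disjoint_family_on_def
    proof (intro ballI impI)
      fix i j assume "i \<in> C" "j \<in> C" "i \<noteq> j"
      then have "ball (fst i) (snd i) \<inter> ball (fst j) (snd j) = {}" using disj unfolding disjoint_family_on_def by blast
      then show "T -` ball (fst i) (snd i) \<inter> T -` ball (fst j) (snd j) = {}" by (simp add: vimage_Int[symmetric])
    qed
  qed
  also have "(\<Union>i\<in>C. T -` ball (fst i) (snd i)) = T -` V" unfolding V_def by auto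
  also have "emeasure lborel (T -` V) = emeasure lborel (T -` V \<union> T -` Z)"
    using TZn measurable_sets[OF Tmeas borel_open[OF Vopen]] by (subst emeasure_Un_null_set) auto
  also have "T -` V \<union> T -` Z = T -` U" using VU unfolding Z_def by auto
  finally show ?thesis ..
qed

lemma iso_lborel:
  fixes T :: "'a::euclidean_space \<Rightarrow> 'a"
  assumes lin: "linear T" and iso: "\<And>x. norm (T x) = norm x" and sj: "surj T"
  shows "distr lborel borel T = lborel"
proof -
  have contT: "continuous_on UNIV T" using lin by (simp add: linear_continuous_on linear_conv_bounded_linear)
  have Tmeas[measurable]: "T \<in> borel_measurable borel"
    using contT by (rule borel_measurable_continuous_onI)
  show ?thesis
  proof (rule lborel_eqI[symmetric])
    fix l u :: 'a assume "\<And>b. b \<in> Basis \<Longrightarrow> l \<bullet> b \<le> u \<bullet> b"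
    then have "emeasure lborel (box l u) = (\<Prod>b\<in>Basis. (u - l) \<bullet> b)"
      by (simp add: emeasure_lborel_box_eq)
    moreover have "emeasure (distr lborel borel T) (box l u) = emeasure lborel (box l u)"
      by (subst emeasure_distr) (auto intro: iso_open[OF lin iso sj])
    ultimately show "emeasure (distr lborel borel T) (box l u) = (\<Prod>b\<in>Basis. (u - l) \<bullet> b)" by simp
  qed simp
qed

lemma householder:
  fixes e w :: "'a::euclidean_space"
  assumes e: "norm e = 1" and w: "norm w = 1"
  obtains T where "linear T" "\<And>x. norm (T x) = norm x" "surj T" "T e = w"
proof (cases "w = e")
  case True
  show ?thesis by (rule that[of "\<lambda>x. x"]) (auto simp: True linear_ident)
next
  case False
  define v where "v = w - e"
  have vv: "v \<bullet> v \<noteq> 0" using False unfolding v_def by simp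
  define T where "T x = x - (2 * (x \<bullet> v) / (v \<bullet> v)) *\<^sub>R v" for x
  have lin: "linear T"
    unfolding T_def by (rule linearI) (simp_all add: inner_add_left algebra_simps add_divide_distrib scaleR_add_left)
  have nT: "norm (T x) = norm x" for x
  proof -
    have "(T x) \<bullet> (T x) = x \<bullet> x"
      unfolding T_def using vv by (simp add: inner_diff_left inner_diff_right inner_commute field_simps power2_eq_square)
    then show ?thesis by (simp add: norm_eq_sqrt_inner)
  qed
  have TT: "T (T x) = x" for x
  proof -
    have "T (T x) = x - (2 * (x \<bullet> v) / (v \<bullet> v)) *\<^sub>R v - (2 * ((x - (2 * (x \<bullet> v) / (v \<bullet> v)) *\<^sub>R v) \<bullet> v) / (v \<bullet> v)) *\<^sub>R v"
      unfolding T_def by simp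
    also have "(x - (2 * (x \<bullet> v) / (v \<bullet> v)) *\<^sub>R v) \<bullet> v = - (x \<bullet> v)"
      using vv by (simp add: inner_diff_left)
    finally show ?thesis by simp
  qed
  have sj: "surj T" by (metis TT surjI)
  have ee: "e \<bullet> e = 1" "w \<bullet> w = 1" using e w by (simp_all add: norm_eq_1)
  have "T e = w"
  proof -
    have ev: "e \<bullet> v = e \<bullet> w - 1" unfolding v_def using ee by (simp add: inner_diff_right)
    have vv2: "v \<bullet> v = 2 - 2 * (e \<bullet> w)" unfolding v_def using ee by (simp add: inner_diff_left inner_diff_right inner_commute)
    have "2 * (e \<bullet> v) / (v \<bullet> v) = -1" using vv unfolding ev vv2 by (simp add: field_simps)
    then show ?thesis unfolding T_def v_def by simp
  qed
  then show ?thesis using that lin nT sj by blast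
qed

lemma sphere_rot:
  fixes T :: "'a::euclidean_space \<Rightarrow> 'a" and F :: "'a \<Rightarrow> ennreal"
  assumes lin: "linear T" and iso: "\<And>x. norm (T x) = norm x" and sj: "surj T"
    and F[measurable]: "F \<in> borel_measurable borel"
  shows "(\<integral>\<^sup>+\<sigma>. F (T \<sigma>) \<partial>sphere_measure) = (\<integral>\<^sup>+\<sigma>. F \<sigma> \<partial>sphere_measure)"
proof -
  have contT: "continuous_on UNIV T" using lin by (simp add: linear_continuous_on linear_conv_bounded_linear)
  have Tmeas[measurable]: "T \<in> borel_measurable borel"
    using contT by (rule borel_measurable_continuous_onI)
  define h where "h x = of_nat DIM('a) * indicator (ball 0 1 - {0}) x * F (x /\<^sub>R norm x)" for x :: 'a
  have hm[measurable]: "h \<in> borel_measurable borel" unfolding h_def by measurable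
  have hT: "h (T x) = of_nat DIM('a) * indicator (ball 0 1 - {0}) x * F (T (x /\<^sub>R norm x))" for x
  proof -
    have "T x = 0 \<longleftrightarrow> x = 0" using iso[of x] by (metis norm_eq_zero)
    then have "indicator (ball 0 1 - {0}) (T x) = (indicator (ball 0 1 - {0}) x :: ennreal)"
      using iso[of x] by (simp add: indicator_def)
    moreover have "T x /\<^sub>R norm (T x) = T (x /\<^sub>R norm x)"
      using iso[of x] lin by (simp add: linear_cmul)
    ultimately show ?thesis unfolding h_def by simp
  qed
  have "(\<integral>\<^sup>+\<sigma>. F \<sigma> \<partial>sphere_measure) = (\<integral>\<^sup>+x. h x \<partial>lborel)"
    unfolding h_def by (rule S_integral) (rule F)
  also have "\<dots> = (\<integral>\<^sup>+x. h x \<partial>distr lborel borel T)"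
    by (simp add: iso_lborel[OF lin iso sj])
  also have "\<dots> = (\<integral>\<^sup>+x. h (T x) \<partial>lborel)"
    by (rule nn_integral_distr) simp_all
  also have "\<dots> = (\<integral>\<^sup>+\<sigma>. F (T \<sigma>) \<partial>sphere_measure)"
    unfolding hT by (rule S_integral[symmetric]) measurable
  finally show ?thesis ..
qed

lemma norm_swap:
  fixes w \<sigma> :: "'a::real_inner"
  assumes "norm w = 1" "norm \<sigma> = 1"
  shows "norm (w - t *\<^sub>R \<sigma>) = norm (\<sigma> - t *\<^sub>R w)"
proof -
  have "w \<bullet> w = 1" "\<sigma> \<bullet> \<sigma> = 1" using assms by (simp_all add: norm_eq_1)
  then have "(norm (w - t *\<^sub>R \<sigma>))\<^sup>2 = (norm (\<sigma> - t *\<^sub>R w))\<^sup>2"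
    by (simp add: power2_norm_eq_inner inner_diff_left inner_diff_right inner_commute)
  then show ?thesis by (simp add: power2_eq_iff_nonneg)
qed

lemma Phi_rot:
  fixes e w :: "'a::euclidean_space"
  assumes e: "e \<in> Basis" and w: "norm w = 1"
  shows "(\<integral>\<^sup>+\<sigma>. ennreal (norm (w - t *\<^sub>R \<sigma>) powr (- (real DIM('a) + s * p))) \<partial>sphere_measure) = Phi e s p t"
proof -
  have ne: "norm e = 1" using e by simp
  obtain T where T: "linear T" "\<And>x. norm (T x) = norm x" "surj T" "T e = w"
    using householder[OF ne w] by metis
  define F where "F \<sigma> = ennreal (norm (w - t *\<^sub>R \<sigma>) powr (- (real DIM('a) + s * p)))" for \<sigma> :: 'a
  have Fm: "F \<in> borel_measurable borel" unfolding F_def by measurable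
  have FT: "F (T \<sigma>) = ennreal (norm (e - t *\<^sub>R \<sigma>) powr (- (real DIM('a) + s * p)))" for \<sigma>
  proof -
    have "w - t *\<^sub>R T \<sigma> = T (e - t *\<^sub>R \<sigma>)" using T by (simp add: linear_diff linear_cmul)
    then show ?thesis unfolding F_def using T(2) by simp
  qed
  have "(\<integral>\<^sup>+\<sigma>. F \<sigma> \<partial>sphere_measure) = (\<integral>\<^sup>+\<sigma>. F (T \<sigma>) \<partial>sphere_measure)"
    by (rule sphere_rot[OF T(1) T(2) T(3) Fm, symmetric])
  then show ?thesis unfolding Phi_def FT by (simp add: F_def)
qed

lemma Phi_finite:
  fixes e :: "'a::euclidean_space"
  assumes e: "e \<in> Basis" and t: "t \<noteq> 1" and t0: "0 < t" and E: "0 \<le> real DIM('a) + s * p"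
  shows "Phi e s p t < \<infinity>"
proof -
  define E where "E = real DIM('a) + s * p"
  have ne: "norm e = 1" using e by simp
  have ae: "AE \<sigma> in sphere_measure. ennreal (norm (e - t *\<^sub>R \<sigma>) powr (- E)) \<le> ennreal (\<bar>1 - t\<bar> powr (- E))"
    using AE_S_unit
  proof (rule eventually_mono)
    fix \<sigma> :: 'a assume s1: "norm \<sigma> = 1"
    have "\<bar>1 - t\<bar> = \<bar>norm e - norm (t *\<^sub>R \<sigma>)\<bar>" using s1 ne t0 by simp
    also have "\<dots> \<le> norm (e - t *\<^sub>R \<sigma>)" by (rule norm_triangle_ineq3)
    finally have le: "\<bar>1 - t\<bar> \<le> norm (e - t *\<^sub>R \<sigma>)" .
    have pos: "0 < \<bar>1 - t\<bar>" using t by simp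
    have "norm (e - t *\<^sub>R \<sigma>) powr (- E) \<le> \<bar>1 - t\<bar> powr (- E)"
      using le pos E unfolding E_def by (intro powr_mono2') auto
    then show "ennreal (norm (e - t *\<^sub>R \<sigma>) powr (- E)) \<le> ennreal (\<bar>1 - t\<bar> powr (- E))"
      by (rule ennreal_leI)
  qed
  have "Phi e s p t \<le> (\<integral>\<^sup>+\<sigma>. ennreal (\<bar>1 - t\<bar> powr (- E)) \<partial>(sphere_measure :: 'a measure))"
    unfolding Phi_def E_def[symmetric] using nn_integral_mono_AE[OF ae] .
  also have "\<dots> = ennreal (\<bar>1 - t\<bar> powr (- E)) * emeasure (sphere_measure :: 'a measure) (space sphere_measure)"
    by simp
  also have "\<dots> < \<infinity>"
  proof -
    have "emeasure (sphere_measure :: 'a measure) (space sphere_measure) < \<infinity>"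
      using finite_measure.emeasure_finite[OF finite_S, of "space (sphere_measure :: 'a measure)"]
      by (simp add: less_top[symmetric])
    then show ?thesis by (simp add: ennreal_mult_less_top)
  qed
  finally show ?thesis .
qed

lemma sf_S: "sigma_finite_measure (sphere_measure :: 'a::euclidean_space measure)"
  using finite_S[where 'a='a] unfolding finite_measure_def by blast

lemma sf_SS: "sigma_finite_measure ((sphere_measure :: 'a::euclidean_space measure) \<Otimes>\<^sub>M sphere_measure)"
  by (rule sigma_finite_pair_measure[OF sf_S sf_S])

lemma tripleP:
  fixes H :: "real \<Rightarrow> 'a::euclidean_space \<Rightarrow> 'a \<Rightarrow> ennreal"
  assumes Hm: "(\<lambda>x. H (fst x) (fst (snd x)) (snd (snd x))) \<in> borel_measurable (lborel \<Otimes>\<^sub>M (sphere_measure \<Otimes>\<^sub>M sphere_measure))"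
  shows "(\<integral>\<^sup>+r. \<integral>\<^sup>+\<omega>. \<integral>\<^sup>+\<sigma>. H r \<omega> \<sigma> \<partial>sphere_measure \<partial>sphere_measure \<partial>lborel) =
         (\<integral>\<^sup>+x. H (fst x) (fst (snd x)) (snd (snd x)) \<partial>(lborel \<Otimes>\<^sub>M (sphere_measure \<Otimes>\<^sub>M sphere_measure)))"
proof -
  have inner: "(\<integral>\<^sup>+\<omega>. \<integral>\<^sup>+\<sigma>. H r \<omega> \<sigma> \<partial>sphere_measure \<partial>sphere_measure) =
      (\<integral>\<^sup>+y. H r (fst y) (snd y) \<partial>(sphere_measure \<Otimes>\<^sub>M sphere_measure))" for r
  proof -
    have m: "(\<lambda>y. H r (fst y) (snd y)) \<in> borel_measurable ((sphere_measure::'a measure) \<Otimes>\<^sub>M sphere_measure)"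
      using measurable_Pair2[OF Hm, of r] by simp
    show ?thesis
      using sigma_finite_measure.nn_integral_fst[OF sf_S m] by simp
  qed
  show ?thesis
    unfolding inner using sigma_finite_measure.nn_integral_fst[OF sf_SS Hm] by simp
qed

lemma null_slice:
  fixes N :: "'a::euclidean_space set"
  assumes N: "N \<in> null_sets lborel"
  shows "AE r in lborel. 0 < r \<longrightarrow> (AE \<omega> in sphere_measure. r *\<^sub>R \<omega> \<notin> N)"
proof -
  have Nb[measurable]: "N \<in> sets borel" using null_setsD2[OF N] by simp
  have mi: "(\<lambda>r. \<integral>\<^sup>+\<omega>. indicator N (r *\<^sub>R \<omega>) \<partial>(sphere_measure::'a measure)) \<in> borel_measurable lborel"
  proof (rule sigma_finite_measure.borel_measurable_nn_integral[OF sf_S])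
    show "(\<lambda>(r, \<omega>). indicator N (r *\<^sub>R \<omega>) :: ennreal) \<in> borel_measurable (lborel \<Otimes>\<^sub>M sphere_measure)"
      by measurable
  qed
  have "(\<integral>\<^sup>+r. indicator {0<..} r * ennreal (r powr (real DIM('a) - 1)) *
            (\<integral>\<^sup>+\<omega>. indicator N (r *\<^sub>R \<omega>) \<partial>sphere_measure) \<partial>lborel) = (\<integral>\<^sup>+x. indicator N x \<partial>lborel)"
    by (rule polar) measurable
  also have "\<dots> = 0" using N by (simp add: null_setsD1)
  finally have "AE r in lborel. indicator {0<..} r * ennreal (r powr (real DIM('a) - 1)) *
            (\<integral>\<^sup>+\<omega>. indicator N (r *\<^sub>R \<omega>) \<partial>(sphere_measure::'a measure)) = 0"
    using mi by (subst (asm) nn_integral_0_iff_AE) simp_all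
  then show ?thesis
  proof (rule eventually_mono, intro impI)
    fix r :: real assume r: "0 < r"
    assume "indicator {0<..} r * ennreal (r powr (real DIM('a) - 1)) *
            (\<integral>\<^sup>+\<omega>. indicator N (r *\<^sub>R \<omega>) \<partial>(sphere_measure::'a measure)) = 0"
    then have "(\<integral>\<^sup>+\<omega>. indicator N (r *\<^sub>R \<omega>) \<partial>(sphere_measure::'a measure)) = 0"
      using r by simp
    then have "AE \<omega> in sphere_measure. (indicator N (r *\<^sub>R \<omega>) :: ennreal) = 0"
      by (subst (asm) nn_integral_0_iff_AE) simp_all
    then show "AE \<omega> in sphere_measure. r *\<^sub>R \<omega> \<notin> N"
      by (rule eventually_mono) (simp add: indicator_def split: if_splits)
  qed
qed

lemma pow_conv:
  fixes X Y th q :: real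
  assumes "0 \<le> X" "0 \<le> Y" "0 < th" "th < 1" "1 \<le> q"
  shows "((1 - th) * X + th * Y) powr q \<le> (1 - th) * X powr q + th * Y powr q"
proof (cases "X = 0 \<or> Y = 0")
  case False
  then have "X \<in> {0<..}" "Y \<in> {0<..}" using assms by auto
  from convex_onD[OF powr_convex[OF assms(5)], of th X Y] this assms
  show ?thesis by (simp add: algebra_simps)
next
  case True
  then show ?thesis
  proof
    assume X: "X = 0"
    have "th powr q \<le> th powr 1" using assms by (intro powr_mono') auto
    then have "th powr q * Y powr q \<le> th * Y powr q" using assms by (intro mult_right_mono) auto
    then show ?thesis using X assms by (simp add: powr_mult)
  next
    assume Y: "Y = 0"
    have "(1 - th) powr q \<le> (1 - th) powr 1" using assms by (intro powr_mono') auto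
    then have "(1 - th) powr q * X powr q \<le> (1 - th) * X powr q" using assms by (intro mult_right_mono) auto
    then show ?thesis using Y assms by (simp add: powr_mult)
  qed
qed

lemma ptwise:
  fixes a b th q :: real
  assumes th: "0 < th" "th < 1" and q: "1 \<le> q"
  shows "\<bar>a\<bar> powr q \<le> (1 - th) powr (1 - q) * \<bar>a - b\<bar> powr q + th powr (1 - q) * \<bar>b\<bar> powr q"
proof -
  define X where "X = \<bar>a - b\<bar> / (1 - th)"
  define Y where "Y = \<bar>b\<bar> / th"
  have XY: "0 \<le> X" "0 \<le> Y" using th unfolding X_def Y_def by auto
  have "\<bar>a\<bar> \<le> \<bar>a - b\<bar> + \<bar>b\<bar>" by simp
  also have "\<dots> = (1 - th) * X + th * Y" using th unfolding X_def Y_def by simp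
  finally have "\<bar>a\<bar> powr q \<le> ((1 - th) * X + th * Y) powr q" using q by (intro powr_mono2) auto
  also have "\<dots> \<le> (1 - th) * X powr q + th * Y powr q" by (rule pow_conv) (use XY th q in auto)
  also have "(1 - th) * X powr q = (1 - th) powr (1 - q) * \<bar>a - b\<bar> powr q"
    using th unfolding X_def by (simp add: powr_divide powr_diff)
  also have "th * Y powr q = th powr (1 - q) * \<bar>b\<bar> powr q"
    using th unfolding Y_def by (simp add: powr_divide powr_diff)
  finally show ?thesis .
qed

lemma ennreal_solve:
  fixes x a y :: real and D :: ennreal
  assumes h: "ennreal x \<le> ennreal a * D + ennreal y" and a: "0 < a" and y: "0 \<le> y"
  shows "ennreal ((x - y) / a) \<le> D"
proof (cases "D = top")
  case True then show ?thesis by simp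
next
  case False
  then obtain d where d: "D = ennreal d" "0 \<le> d" by (cases D) auto
  have "ennreal x \<le> ennreal (a * d + y)" using h d a y by (simp add: ennreal_mult ennreal_plus)
  then have "x \<le> a * d + y" using a d y by (subst (asm) ennreal_le_iff) auto
  then have "(x - y) / a \<le> d" using a by (simp add: field_simps)
  then show ?thesis using d by (simp add: ennreal_leI)
qed

lemma J_eq_I:
  fixes g :: "'a::euclidean_space \<Rightarrow> real" and q \<gamma> :: real
  assumes g[measurable]: "g \<in> borel_measurable borel"
  shows "(\<integral>\<^sup>+r. indicator {0<..} r * (\<integral>\<^sup>+\<omega>. ennreal (r powr (\<gamma> - 1) * \<bar>g (r *\<^sub>R \<omega>)\<bar> powr q) \<partial>sphere_measure) \<partial>lborel)
       = (\<integral>\<^sup>+x. ennreal (\<bar>g x\<bar> powr q * norm x powr (\<gamma> - real DIM('a))) \<partial>lborel)"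
proof -
  define F where "F x = ennreal (\<bar>g x\<bar> powr q * norm x powr (\<gamma> - real DIM('a)))" for x :: 'a
  have Fm: "F \<in> borel_measurable borel" unfolding F_def by measurable
  have "(\<integral>\<^sup>+x. F x \<partial>lborel) = (\<integral>\<^sup>+r. indicator {0<..} r * ennreal (r powr (real DIM('a) - 1)) *
            (\<integral>\<^sup>+\<omega>. F (r *\<^sub>R \<omega>) \<partial>sphere_measure) \<partial>lborel)"
    by (rule polar[OF Fm, symmetric])
  also have "\<dots> = (\<integral>\<^sup>+r. indicator {0<..} r * (\<integral>\<^sup>+\<omega>. ennreal (r powr (\<gamma> - 1) * \<bar>g (r *\<^sub>R \<omega>)\<bar> powr q) \<partial>sphere_measure) \<partial>lborel)"
  proof (rule nn_integral_cong)
    fix r :: real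
    show "indicator {0<..} r * ennreal (r powr (real DIM('a) - 1)) * (\<integral>\<^sup>+\<omega>. F (r *\<^sub>R \<omega>) \<partial>sphere_measure) =
        indicator {0<..} r * (\<integral>\<^sup>+\<omega>. ennreal (r powr (\<gamma> - 1) * \<bar>g (r *\<^sub>R \<omega>)\<bar> powr q) \<partial>sphere_measure)"
    proof (cases "0 < r")
      case False then show ?thesis by simp
    next
      case r: True
      have m: "(\<lambda>\<omega>. F (r *\<^sub>R \<omega>)) \<in> borel_measurable (sphere_measure :: 'a measure)"
        unfolding F_def by measurable
      have "ennreal (r powr (real DIM('a) - 1)) * (\<integral>\<^sup>+\<omega>. F (r *\<^sub>R \<omega>) \<partial>sphere_measure)
          = (\<integral>\<^sup>+\<omega>. ennreal (r powr (real DIM('a) - 1)) * F (r *\<^sub>R \<omega>) \<partial>(sphere_measure :: 'a measure))"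
        by (rule nn_integral_cmult[OF m, symmetric])
      also have "\<dots> = (\<integral>\<^sup>+\<omega>. ennreal (r powr (\<gamma> - 1) * \<bar>g (r *\<^sub>R \<omega>)\<bar> powr q) \<partial>sphere_measure)"
      proof (rule nn_integral_cong_AE)
        show "AE \<omega> in sphere_measure. ennreal (r powr (real DIM('a) - 1)) * F (r *\<^sub>R \<omega>) =
             ennreal (r powr (\<gamma> - 1) * \<bar>g (r *\<^sub>R \<omega>)\<bar> powr q)"
          using AE_S_unit
        proof (rule eventually_mono)
          fix \<omega> :: 'a assume w: "norm \<omega> = 1"
          have "r powr (real DIM('a) - 1) * (\<bar>g (r *\<^sub>R \<omega>)\<bar> powr q * r powr (\<gamma> - real DIM('a)))
              = r powr (\<gamma> - 1) * \<bar>g (r *\<^sub>R \<omega>)\<bar> powr q"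
          proof -
            have "r powr (real DIM('a) - 1) * r powr (\<gamma> - real DIM('a)) = r powr (\<gamma> - 1)"
              using r by (simp add: powr_add[symmetric])
            then show ?thesis by (simp add: mult_ac)
          qed
          then show "ennreal (r powr (real DIM('a) - 1)) * F (r *\<^sub>R \<omega>) =
             ennreal (r powr (\<gamma> - 1) * \<bar>g (r *\<^sub>R \<omega>)\<bar> powr q)"
            unfolding F_def using w r by (simp add: ennreal_mult[symmetric] abs_of_pos)
        qed
      qed
      finally show ?thesis by (simp add: mult.assoc)
    qed
  qed
  finally show ?thesis unfolding F_def ..
qed

lemma div_powr_eq: "0 \<le> (n::real) \<Longrightarrow> x / n powr E = x * n powr (- E)"
  by (cases "n = 0") (simp_all add: powr_minus divide_inverse)

lemma A_eq:
  fixes g :: "'a::euclidean_space \<Rightarrow> real" and q \<gamma> s p t :: real and e :: 'a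
  assumes g[measurable]: "g \<in> borel_measurable borel" and e: "e \<in> Basis"
  shows "(\<integral>\<^sup>+r. \<integral>\<^sup>+\<omega>. \<integral>\<^sup>+\<sigma>. indicator {0<..} r * ennreal (r powr (\<gamma> - 1) * \<bar>g (r *\<^sub>R \<omega>)\<bar> powr q
            / norm (\<omega> - t *\<^sub>R \<sigma>) powr (real DIM('a) + s * p)) \<partial>sphere_measure \<partial>sphere_measure \<partial>lborel)
       = Phi e s p t * (\<integral>\<^sup>+r. indicator {0<..} r * (\<integral>\<^sup>+\<omega>. ennreal (r powr (\<gamma> - 1) * \<bar>g (r *\<^sub>R \<omega>)\<bar> powr q) \<partial>sphere_measure) \<partial>lborel)"
proof -
  define E where "E = real DIM('a) + s * p"
  define c where "c r \<omega> = r powr (\<gamma> - 1) * \<bar>g (r *\<^sub>R \<omega>)\<bar> powr q" for r :: real and \<omega> :: 'a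
  have c0: "0 \<le> c r \<omega>" for r \<omega> unfolding c_def by simp
  have step: "(\<integral>\<^sup>+\<omega>. \<integral>\<^sup>+\<sigma>. indicator {0<..} r * ennreal (c r \<omega> / norm (\<omega> - t *\<^sub>R \<sigma>) powr E) \<partial>sphere_measure \<partial>sphere_measure)
     = Phi e s p t * (indicator {0<..} r * (\<integral>\<^sup>+\<omega>. ennreal (c r \<omega>) \<partial>sphere_measure))" for r
  proof -
    have inner: "(\<integral>\<^sup>+\<sigma>. indicator {0<..} r * ennreal (c r \<omega> / norm (\<omega> - t *\<^sub>R \<sigma>) powr E) \<partial>sphere_measure)
       = indicator {0<..} r * ennreal (c r \<omega>) * (\<integral>\<^sup>+\<sigma>. ennreal (norm (\<omega> - t *\<^sub>R \<sigma>) powr (- E)) \<partial>(sphere_measure :: 'a measure))" for \<omega>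
    proof -
      have "(\<integral>\<^sup>+\<sigma>. indicator {0<..} r * ennreal (c r \<omega> / norm (\<omega> - t *\<^sub>R \<sigma>) powr E) \<partial>sphere_measure)
          = (\<integral>\<^sup>+\<sigma>. (indicator {0<..} r * ennreal (c r \<omega>)) * ennreal (norm (\<omega> - t *\<^sub>R \<sigma>) powr (- E)) \<partial>(sphere_measure :: 'a measure))"
        by (rule nn_integral_cong) (simp add: div_powr_eq ennreal_mult c0 mult.assoc)
      also have "\<dots> = indicator {0<..} r * ennreal (c r \<omega>) * (\<integral>\<^sup>+\<sigma>. ennreal (norm (\<omega> - t *\<^sub>R \<sigma>) powr (- E)) \<partial>(sphere_measure :: 'a measure))"
        by (rule nn_integral_cmult) measurable
      finally show ?thesis .
    qed
    have "(\<integral>\<^sup>+\<omega>. \<integral>\<^sup>+\<sigma>. indicator {0<..} r * ennreal (c r \<omega> / norm (\<omega> - t *\<^sub>R \<sigma>) powr E) \<partial>sphere_measure \<partial>sphere_measure)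
       = (\<integral>\<^sup>+\<omega>. (indicator {0<..} r * ennreal (c r \<omega>)) * Phi e s p t \<partial>(sphere_measure :: 'a measure))"
      unfolding inner
    proof (rule nn_integral_cong_AE)
      show "AE \<omega> in sphere_measure. indicator {0<..} r * ennreal (c r \<omega>) * (\<integral>\<^sup>+\<sigma>. ennreal (norm (\<omega> - t *\<^sub>R \<sigma>) powr (- E)) \<partial>(sphere_measure :: 'a measure))
          = (indicator {0<..} r * ennreal (c r \<omega>)) * Phi e s p t"
        using AE_S_unit
      proof (rule eventually_mono)
        fix \<omega> :: 'a assume "norm \<omega> = 1"
        then show "indicator {0<..} r * ennreal (c r \<omega>) * (\<integral>\<^sup>+\<sigma>. ennreal (norm (\<omega> - t *\<^sub>R \<sigma>) powr (- E)) \<partial>(sphere_measure :: 'a measure))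
          = (indicator {0<..} r * ennreal (c r \<omega>)) * Phi e s p t"
          unfolding E_def using Phi_rot[OF e, of \<omega> t s p] by simp
      qed
    qed
    also have "\<dots> = (indicator {0<..} r * (\<integral>\<^sup>+\<omega>. ennreal (c r \<omega>) \<partial>sphere_measure)) * Phi e s p t"
    proof -
      have m: "(\<lambda>\<omega>. ennreal (c r \<omega>)) \<in> borel_measurable (sphere_measure :: 'a measure)"
        unfolding c_def by measurable
      have m2: "(\<lambda>\<omega>. indicator {0<..} r * ennreal (c r \<omega>)) \<in> borel_measurable (sphere_measure :: 'a measure)"
        unfolding c_def by measurable
      show ?thesis
        using nn_integral_multc[OF m2, of "Phi e s p t"] nn_integral_cmult[OF m, of "indicator {0<..} r"]
        by simp
    qed
    finally show ?thesis by (simp add: mult.commute)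
  qed
  have mJ: "(\<lambda>r. indicator {0<..} r * (\<integral>\<^sup>+\<omega>. ennreal (c r \<omega>) \<partial>(sphere_measure :: 'a measure))) \<in> borel_measurable lborel"
  proof -
    have "(\<lambda>r. \<integral>\<^sup>+\<omega>. ennreal (c r \<omega>) \<partial>(sphere_measure :: 'a measure)) \<in> borel_measurable lborel"
      by (rule sigma_finite_measure.borel_measurable_nn_integral[OF sf_S]) (unfold c_def, measurable)
    then show ?thesis by measurable
  qed
  have "(\<integral>\<^sup>+r. \<integral>\<^sup>+\<omega>. \<integral>\<^sup>+\<sigma>. indicator {0<..} r * ennreal (c r \<omega> / norm (\<omega> - t *\<^sub>R \<sigma>) powr E) \<partial>sphere_measure \<partial>sphere_measure \<partial>lborel)
      = (\<integral>\<^sup>+r. Phi e s p t * (indicator {0<..} r * (\<integral>\<^sup>+\<omega>. ennreal (c r \<omega>) \<partial>sphere_measure)) \<partial>lborel)"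
    by (rule nn_integral_cong) (rule step)
  also have "\<dots> = Phi e s p t * (\<integral>\<^sup>+r. indicator {0<..} r * (\<integral>\<^sup>+\<omega>. ennreal (c r \<omega>) \<partial>sphere_measure) \<partial>lborel)"
    by (rule nn_integral_cmult[OF mJ])
  finally show ?thesis unfolding c_def E_def .
qed

lemma psf_S: "pair_sigma_finite (sphere_measure :: 'a::euclidean_space measure) (sphere_measure :: 'a measure)"
  by (simp add: pair_sigma_finite_def sf_S)

lemma rescale_J:
  fixes g :: "'a::euclidean_space \<Rightarrow> real" and q \<gamma> t :: real
  assumes g[measurable]: "g \<in> borel_measurable borel" and t: "0 < t"
  shows "(\<integral>\<^sup>+r. indicator {0<..} r * (\<integral>\<^sup>+\<sigma>. ennreal (r powr (\<gamma> - 1) * \<bar>g ((r * t) *\<^sub>R \<sigma>)\<bar> powr q) \<partial>sphere_measure) \<partial>lborel)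
     = ennreal (t powr (- \<gamma>)) * (\<integral>\<^sup>+r. indicator {0<..} r * (\<integral>\<^sup>+\<omega>. ennreal (r powr (\<gamma> - 1) * \<bar>g (r *\<^sub>R \<omega>)\<bar> powr q) \<partial>sphere_measure) \<partial>lborel)"
proof -
  define f where "f r = indicator {0<..} r * (\<integral>\<^sup>+\<omega>. ennreal (r powr (\<gamma> - 1) * \<bar>g (r *\<^sub>R \<omega>)\<bar> powr q) \<partial>(sphere_measure :: 'a measure))" for r
  define X where "X = (\<integral>\<^sup>+r. indicator {0<..} r * (\<integral>\<^sup>+\<sigma>. ennreal (r powr (\<gamma> - 1) * \<bar>g ((r * t) *\<^sub>R \<sigma>)\<bar> powr q) \<partial>(sphere_measure :: 'a measure)) \<partial>lborel)"
  have fm: "f \<in> borel_measurable borel"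
  proof -
    have "(\<lambda>r. \<integral>\<^sup>+\<omega>. ennreal (r powr (\<gamma> - 1) * \<bar>g (r *\<^sub>R \<omega>)\<bar> powr q) \<partial>(sphere_measure :: 'a measure)) \<in> borel_measurable lborel"
      by (rule sigma_finite_measure.borel_measurable_nn_integral[OF sf_S]) measurable
    then show ?thesis unfolding f_def by measurable
  qed
  have ft: "ennreal t * f (t * r) = ennreal (t powr \<gamma>) * (indicator {0<..} r * (\<integral>\<^sup>+\<sigma>. ennreal (r powr (\<gamma> - 1) * \<bar>g ((r * t) *\<^sub>R \<sigma>)\<bar> powr q) \<partial>(sphere_measure :: 'a measure)))" for r
  proof (cases "0 < r")
    case False
    then have "\<not> 0 < t * r" using t by (simp add: zero_less_mult_iff)
    then show ?thesis using False unfolding f_def by simp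
  next
    case r: True
    have tr: "0 < t * r" using t r by simp
    have m: "(\<lambda>\<sigma>. ennreal (r powr (\<gamma> - 1) * \<bar>g ((r * t) *\<^sub>R \<sigma>)\<bar> powr q)) \<in> borel_measurable (sphere_measure :: 'a measure)"
      by measurable
    have "f (t * r) = (\<integral>\<^sup>+\<sigma>. ennreal (t powr (\<gamma> - 1)) * ennreal (r powr (\<gamma> - 1) * \<bar>g ((r * t) *\<^sub>R \<sigma>)\<bar> powr q) \<partial>(sphere_measure :: 'a measure))"
    proof -
      have i: "indicator {0<..} (t * r) = (1::ennreal)" using tr by simp
      have "f (t * r) = (\<integral>\<^sup>+\<omega>. ennreal ((t * r) powr (\<gamma> - 1) * \<bar>g ((t * r) *\<^sub>R \<omega>)\<bar> powr q) \<partial>(sphere_measure :: 'a measure))"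
        unfolding f_def i by simp
      also have "\<dots> = (\<integral>\<^sup>+\<sigma>. ennreal (t powr (\<gamma> - 1)) * ennreal (r powr (\<gamma> - 1) * \<bar>g ((r * t) *\<^sub>R \<sigma>)\<bar> powr q) \<partial>(sphere_measure :: 'a measure))"
      proof (rule nn_integral_cong)
        fix \<sigma> :: 'a
        have h1: "(r * t) powr (\<gamma> - 1) = t powr (\<gamma> - 1) * r powr (\<gamma> - 1)" using t r by (simp add: powr_mult mult.commute)
        have "(t * r) powr (\<gamma> - 1) * \<bar>g ((t * r) *\<^sub>R \<sigma>)\<bar> powr q = t powr (\<gamma> - 1) * (r powr (\<gamma> - 1) * \<bar>g ((r * t) *\<^sub>R \<sigma>)\<bar> powr q)"
          unfolding mult.commute[of t r] h1 by (simp only: mult.assoc)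
        then show "ennreal ((t * r) powr (\<gamma> - 1) * \<bar>g ((t * r) *\<^sub>R \<sigma>)\<bar> powr q) =
            ennreal (t powr (\<gamma> - 1)) * ennreal (r powr (\<gamma> - 1) * \<bar>g ((r * t) *\<^sub>R \<sigma>)\<bar> powr q)"
          by (simp only:) (rule ennreal_mult; simp)
      qed
      finally show ?thesis .
    qed
    also have "\<dots> = ennreal (t powr (\<gamma> - 1)) * (\<integral>\<^sup>+\<sigma>. ennreal (r powr (\<gamma> - 1) * \<bar>g ((r * t) *\<^sub>R \<sigma>)\<bar> powr q) \<partial>(sphere_measure :: 'a measure))"
      by (rule nn_integral_cmult[OF m])
    finally have "ennreal t * f (t * r) = (ennreal t * ennreal (t powr (\<gamma> - 1))) * (\<integral>\<^sup>+\<sigma>. ennreal (r powr (\<gamma> - 1) * \<bar>g ((r * t) *\<^sub>R \<sigma>)\<bar> powr q) \<partial>(sphere_measure :: 'a measure))"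
      by (simp add: mult.assoc)
    also have "ennreal t * ennreal (t powr (\<gamma> - 1)) = ennreal (t powr \<gamma>)"
      using t by (simp add: ennreal_mult[symmetric] powr_diff)
    finally show ?thesis using r by simp
  qed
  have "(\<integral>\<^sup>+r. f r \<partial>lborel) = ennreal \<bar>t\<bar> * (\<integral>\<^sup>+r. f (0 + t * r) \<partial>lborel)"
    by (rule nn_integral_real_affine[OF fm]) (use t in simp)
  also have "\<dots> = (\<integral>\<^sup>+r. ennreal t * f (t * r) \<partial>lborel)"
  proof -
    have "(\<lambda>r. f (t * r)) \<in> borel_measurable lborel" using fm by measurable
    then show ?thesis using t by (simp add: nn_integral_cmult)
  qed
  also have "\<dots> = ennreal (t powr \<gamma>) * X"
  proof -
    have "(\<lambda>r. \<integral>\<^sup>+\<sigma>. ennreal (r powr (\<gamma> - 1) * \<bar>g ((r * t) *\<^sub>R \<sigma>)\<bar> powr q) \<partial>(sphere_measure :: 'a measure)) \<in> borel_measurable lborel"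
      by (rule sigma_finite_measure.borel_measurable_nn_integral[OF sf_S]) measurable
    then have "(\<lambda>r. indicator {0<..} r * (\<integral>\<^sup>+\<sigma>. ennreal (r powr (\<gamma> - 1) * \<bar>g ((r * t) *\<^sub>R \<sigma>)\<bar> powr q) \<partial>(sphere_measure :: 'a measure))) \<in> borel_measurable lborel"
      by measurable
    then show ?thesis unfolding ft X_def by (rule nn_integral_cmult)
  qed
  finally have J: "(\<integral>\<^sup>+r. f r \<partial>lborel) = ennreal (t powr \<gamma>) * X" .
  have "ennreal (t powr (- \<gamma>)) * ennreal (t powr \<gamma>) = 1"
    using t by (simp add: ennreal_mult[symmetric] powr_add[symmetric])
  then have "X = ennreal (t powr (- \<gamma>)) * (\<integral>\<^sup>+r. f r \<partial>lborel)"
    unfolding J by (simp add: mult.assoc[symmetric])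
  then show ?thesis unfolding X_def f_def .
qed

lemma B_eq:
  fixes g :: "'a::euclidean_space \<Rightarrow> real" and q \<gamma> s p t :: real and e :: 'a
  assumes g[measurable]: "g \<in> borel_measurable borel" and e: "e \<in> Basis" and t: "0 < t"
  shows "(\<integral>\<^sup>+r. \<integral>\<^sup>+\<omega>. \<integral>\<^sup>+\<sigma>. indicator {0<..} r * ennreal (r powr (\<gamma> - 1) * \<bar>g ((r * t) *\<^sub>R \<sigma>)\<bar> powr q
            / norm (\<omega> - t *\<^sub>R \<sigma>) powr (real DIM('a) + s * p)) \<partial>sphere_measure \<partial>sphere_measure \<partial>lborel)
       = ennreal (t powr (- \<gamma>)) * Phi e s p t * (\<integral>\<^sup>+r. indicator {0<..} r * (\<integral>\<^sup>+\<omega>. ennreal (r powr (\<gamma> - 1) * \<bar>g (r *\<^sub>R \<omega>)\<bar> powr q) \<partial>sphere_measure) \<partial>lborel)"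
proof -
  define E where "E = real DIM('a) + s * p"
  define b where "b r \<sigma> = r powr (\<gamma> - 1) * \<bar>g ((r * t) *\<^sub>R \<sigma>)\<bar> powr q" for r :: real and \<sigma> :: 'a
  have b0: "0 \<le> b r \<sigma>" for r \<sigma> unfolding b_def by simp
  have step: "(\<integral>\<^sup>+\<omega>. \<integral>\<^sup>+\<sigma>. indicator {0<..} r * ennreal (b r \<sigma> / norm (\<omega> - t *\<^sub>R \<sigma>) powr E) \<partial>sphere_measure \<partial>sphere_measure)
     = Phi e s p t * (indicator {0<..} r * (\<integral>\<^sup>+\<sigma>. ennreal (b r \<sigma>) \<partial>(sphere_measure :: 'a measure)))" for r
  proof -
    define h where "h \<omega> \<sigma> = (indicator {0<..} r * ennreal (b r \<sigma>)) * ennreal (norm (\<omega> - t *\<^sub>R \<sigma>) powr (- E))" for \<omega> \<sigma> :: 'a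
    have hm: "case_prod h \<in> borel_measurable ((sphere_measure :: 'a measure) \<Otimes>\<^sub>M sphere_measure)"
      unfolding h_def b_def by measurable
    have "(\<integral>\<^sup>+\<omega>. \<integral>\<^sup>+\<sigma>. indicator {0<..} r * ennreal (b r \<sigma> / norm (\<omega> - t *\<^sub>R \<sigma>) powr E) \<partial>sphere_measure \<partial>sphere_measure)
       = (\<integral>\<^sup>+\<omega>. \<integral>\<^sup>+\<sigma>. h \<omega> \<sigma> \<partial>sphere_measure \<partial>(sphere_measure :: 'a measure))"
      unfolding h_def
      by (intro nn_integral_cong) (simp add: div_powr_eq ennreal_mult b0 mult.assoc)
    also have "\<dots> = (\<integral>\<^sup>+\<sigma>. \<integral>\<^sup>+\<omega>. h \<omega> \<sigma> \<partial>sphere_measure \<partial>(sphere_measure :: 'a measure))"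
      using pair_sigma_finite.Fubini'[OF psf_S hm] by (rule sym)
    also have "\<dots> = (\<integral>\<^sup>+\<sigma>. (indicator {0<..} r * ennreal (b r \<sigma>)) * Phi e s p t \<partial>(sphere_measure :: 'a measure))"
    proof (rule nn_integral_cong_AE)
      show "AE \<sigma> in sphere_measure. (\<integral>\<^sup>+\<omega>. h \<omega> \<sigma> \<partial>(sphere_measure :: 'a measure)) = (indicator {0<..} r * ennreal (b r \<sigma>)) * Phi e s p t"
        using AE_S_unit
      proof (rule eventually_mono)
        fix \<sigma> :: 'a assume s1: "norm \<sigma> = 1"
        have m: "(\<lambda>\<omega>. ennreal (norm (\<omega> - t *\<^sub>R \<sigma>) powr (- E))) \<in> borel_measurable (sphere_measure :: 'a measure)"
          by measurable
        have "(\<integral>\<^sup>+\<omega>. h \<omega> \<sigma> \<partial>(sphere_measure :: 'a measure)) =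
            (indicator {0<..} r * ennreal (b r \<sigma>)) * (\<integral>\<^sup>+\<omega>. ennreal (norm (\<omega> - t *\<^sub>R \<sigma>) powr (- E)) \<partial>(sphere_measure :: 'a measure))"
          unfolding h_def by (rule nn_integral_cmult[OF m])
        also have "(\<integral>\<^sup>+\<omega>. ennreal (norm (\<omega> - t *\<^sub>R \<sigma>) powr (- E)) \<partial>(sphere_measure :: 'a measure)) =
            (\<integral>\<^sup>+\<omega>. ennreal (norm (\<sigma> - t *\<^sub>R \<omega>) powr (- E)) \<partial>(sphere_measure :: 'a measure))"
        proof (rule nn_integral_cong_AE)
          show "AE \<omega> in sphere_measure. ennreal (norm (\<omega> - t *\<^sub>R \<sigma>) powr (- E)) = ennreal (norm (\<sigma> - t *\<^sub>R \<omega>) powr (- E))"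
            using AE_S_unit by (rule eventually_mono) (simp add: norm_swap[OF _ s1])
        qed
        also have "\<dots> = Phi e s p t"
          unfolding E_def by (rule Phi_rot[OF e s1])
        finally show "(\<integral>\<^sup>+\<omega>. h \<omega> \<sigma> \<partial>(sphere_measure :: 'a measure)) = (indicator {0<..} r * ennreal (b r \<sigma>)) * Phi e s p t" .
      qed
    qed
    also have "\<dots> = (indicator {0<..} r * (\<integral>\<^sup>+\<sigma>. ennreal (b r \<sigma>) \<partial>(sphere_measure :: 'a measure))) * Phi e s p t"
    proof -
      have m: "(\<lambda>\<sigma>. ennreal (b r \<sigma>)) \<in> borel_measurable (sphere_measure :: 'a measure)"
        unfolding b_def by measurable
      have m2: "(\<lambda>\<sigma>. indicator {0<..} r * ennreal (b r \<sigma>)) \<in> borel_measurable (sphere_measure :: 'a measure)"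
        unfolding b_def by measurable
      show ?thesis
        using nn_integral_multc[OF m2, of "Phi e s p t"] nn_integral_cmult[OF m, of "indicator {0<..} r"]
        by simp
    qed
    finally show ?thesis by (simp add: mult.commute)
  qed
  have mJ: "(\<lambda>r. indicator {0<..} r * (\<integral>\<^sup>+\<sigma>. ennreal (b r \<sigma>) \<partial>(sphere_measure :: 'a measure))) \<in> borel_measurable lborel"
  proof -
    have "(\<lambda>r. \<integral>\<^sup>+\<sigma>. ennreal (b r \<sigma>) \<partial>(sphere_measure :: 'a measure)) \<in> borel_measurable lborel"
      by (rule sigma_finite_measure.borel_measurable_nn_integral[OF sf_S]) (unfold b_def, measurable)
    then show ?thesis by measurable
  qed
  have "(\<integral>\<^sup>+r. \<integral>\<^sup>+\<omega>. \<integral>\<^sup>+\<sigma>. indicator {0<..} r * ennreal (b r \<sigma> / norm (\<omega> - t *\<^sub>R \<sigma>) powr E) \<partial>sphere_measure \<partial>sphere_measure \<partial>lborel)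
      = (\<integral>\<^sup>+r. Phi e s p t * (indicator {0<..} r * (\<integral>\<^sup>+\<sigma>. ennreal (b r \<sigma>) \<partial>(sphere_measure :: 'a measure))) \<partial>lborel)"
    by (rule nn_integral_cong) (rule step)
  also have "\<dots> = Phi e s p t * (\<integral>\<^sup>+r. indicator {0<..} r * (\<integral>\<^sup>+\<sigma>. ennreal (b r \<sigma>) \<partial>(sphere_measure :: 'a measure)) \<partial>lborel)"
    by (rule nn_integral_cmult[OF mJ])
  also have "(\<integral>\<^sup>+r. indicator {0<..} r * (\<integral>\<^sup>+\<sigma>. ennreal (b r \<sigma>) \<partial>(sphere_measure :: 'a measure)) \<partial>lborel)
     = ennreal (t powr (- \<gamma>)) * (\<integral>\<^sup>+r. indicator {0<..} r * (\<integral>\<^sup>+\<omega>. ennreal (r powr (\<gamma> - 1) * \<bar>g (r *\<^sub>R \<omega>)\<bar> powr q) \<partial>sphere_measure) \<partial>lborel)"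
    unfolding b_def by (rule rescale_J[OF g t])
  finally show ?thesis unfolding b_def E_def by (simp add: mult_ac)
qed

lemma combine:
  fixes H1 H2 H3 :: "real \<Rightarrow> 'a::euclidean_space \<Rightarrow> 'a \<Rightarrow> ennreal" and a b :: ennreal
  assumes m1: "(\<lambda>x. H1 (fst x) (fst (snd x)) (snd (snd x))) \<in> borel_measurable (lborel \<Otimes>\<^sub>M (sphere_measure \<Otimes>\<^sub>M sphere_measure))"
    and m2: "(\<lambda>x. H2 (fst x) (fst (snd x)) (snd (snd x))) \<in> borel_measurable (lborel \<Otimes>\<^sub>M (sphere_measure \<Otimes>\<^sub>M sphere_measure))"
    and m3: "(\<lambda>x. H3 (fst x) (fst (snd x)) (snd (snd x))) \<in> borel_measurable (lborel \<Otimes>\<^sub>M (sphere_measure \<Otimes>\<^sub>M sphere_measure))"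
    and le: "\<And>r \<omega> \<sigma>. H1 r \<omega> \<sigma> \<le> a * H2 r \<omega> \<sigma> + b * H3 r \<omega> \<sigma>"
  shows "(\<integral>\<^sup>+r. \<integral>\<^sup>+\<omega>. \<integral>\<^sup>+\<sigma>. H1 r \<omega> \<sigma> \<partial>sphere_measure \<partial>sphere_measure \<partial>lborel) \<le>
     a * (\<integral>\<^sup>+r. \<integral>\<^sup>+\<omega>. \<integral>\<^sup>+\<sigma>. H2 r \<omega> \<sigma> \<partial>sphere_measure \<partial>sphere_measure \<partial>lborel) +
     b * (\<integral>\<^sup>+r. \<integral>\<^sup>+\<omega>. \<integral>\<^sup>+\<sigma>. H3 r \<omega> \<sigma> \<partial>sphere_measure \<partial>sphere_measure \<partial>lborel)"
proof -
  let ?P = "lborel \<Otimes>\<^sub>M ((sphere_measure :: 'a measure) \<Otimes>\<^sub>M sphere_measure)"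
  let ?h1 = "\<lambda>x. H1 (fst x) (fst (snd x)) (snd (snd x))"
  let ?h2 = "\<lambda>x. H2 (fst x) (fst (snd x)) (snd (snd x))"
  let ?h3 = "\<lambda>x. H3 (fst x) (fst (snd x)) (snd (snd x))"
  have "(\<integral>\<^sup>+x. ?h1 x \<partial>?P) \<le> (\<integral>\<^sup>+x. a * ?h2 x + b * ?h3 x \<partial>?P)"
    by (rule nn_integral_mono) (rule le)
  also have "\<dots> = (\<integral>\<^sup>+x. a * ?h2 x \<partial>?P) + (\<integral>\<^sup>+x. b * ?h3 x \<partial>?P)"
    by (rule nn_integral_add) (use m2 m3 in measurable)
  also have "\<dots> = a * (\<integral>\<^sup>+x. ?h2 x \<partial>?P) + b * (\<integral>\<^sup>+x. ?h3 x \<partial>?P)"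
    using nn_integral_cmult[OF m2, of a] nn_integral_cmult[OF m3, of b] by simp
  finally show ?thesis
    using tripleP[OF m1] tripleP[OF m2] tripleP[OF m3] by simp
qed

lemma ptw_enn:
  fixes A B R N al be q :: real and c :: ennreal
  assumes h: "\<bar>A\<bar> powr q \<le> al * \<bar>A - B\<bar> powr q + be * \<bar>B\<bar> powr q"
    and R: "0 \<le> R" and N: "0 \<le> N" and al: "0 \<le> al" and be: "0 \<le> be"
  shows "c * ennreal (R * \<bar>A\<bar> powr q / N) \<le> ennreal al * (c * ennreal (R * \<bar>A - B\<bar> powr q / N)) + ennreal be * (c * ennreal (R * \<bar>B\<bar> powr q / N))"
proof -
  have RN: "0 \<le> R / N" using R N by simp
  have "R * \<bar>A\<bar> powr q / N = (R / N) * \<bar>A\<bar> powr q" by simp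
  also have "\<dots> \<le> (R / N) * (al * \<bar>A - B\<bar> powr q + be * \<bar>B\<bar> powr q)"
    by (rule mult_left_mono[OF h RN])
  also have "\<dots> = al * (R * \<bar>A - B\<bar> powr q / N) + be * (R * \<bar>B\<bar> powr q / N)"
    by (simp add: algebra_simps)
  finally have r: "R * \<bar>A\<bar> powr q / N \<le> al * (R * \<bar>A - B\<bar> powr q / N) + be * (R * \<bar>B\<bar> powr q / N)" .
  have n1: "0 \<le> R * \<bar>A - B\<bar> powr q / N" "0 \<le> R * \<bar>B\<bar> powr q / N" using R N by simp_all
  have "ennreal (R * \<bar>A\<bar> powr q / N) \<le> ennreal (al * (R * \<bar>A - B\<bar> powr q / N) + be * (R * \<bar>B\<bar> powr q / N))"
    by (rule ennreal_leI[OF r])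
  also have "\<dots> = ennreal al * ennreal (R * \<bar>A - B\<bar> powr q / N) + ennreal be * ennreal (R * \<bar>B\<bar> powr q / N)"
    by (simp only: ennreal_plus[OF mult_nonneg_nonneg[OF al n1(1)] mult_nonneg_nonneg[OF be n1(2)]]
        ennreal_mult[OF al n1(1)] ennreal_mult[OF be n1(2)])
  finally have "c * ennreal (R * \<bar>A\<bar> powr q / N) \<le> c * (ennreal al * ennreal (R * \<bar>A - B\<bar> powr q / N) + ennreal be * ennreal (R * \<bar>B\<bar> powr q / N))"
    by (rule mult_left_mono) simp
  also have "\<dots> = ennreal al * (c * ennreal (R * \<bar>A - B\<bar> powr q / N)) + ennreal be * (c * ennreal (R * \<bar>B\<bar> powr q / N))"
    by (simp add: algebra_simps)
  finally show ?thesis .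
qed

lemma arith1:
  fixes th q P :: real
  assumes "0 < th" "th < 1"
  shows "(P - th powr (1 - q) * th powr q * P) / (1 - th) powr (1 - q) = (1 - th) powr q * P"
proof -
  have "th powr (1 - q) * th powr q = th" using assms by (simp add: powr_add[symmetric])
  then have "(P - th powr (1 - q) * th powr q * P) = (1 - th) powr 1 * P" using assms by (simp add: algebra_simps)
  also have "\<dots> / (1 - th) powr (1 - q) = (1 - th) powr q * P"
  proof -
    have "(1 - th) powr q = (1 - th) powr 1 / (1 - th) powr (1 - q)" by (subst powr_diff[symmetric]) simp
    then show ?thesis by (simp add: times_divide_eq_left)
  qed
  finally show ?thesis .
qed

lemma arith2:
  fixes th q P :: real
  assumes "0 < th" "th < 1"
  shows "(th powr (- q) * P - th powr (1 - q) * P) / (1 - th) powr (1 - q) = (1 / th - 1) powr q * P"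
proof -
  have "th powr (1 - q) = th powr 1 * th powr (- q)" by (subst powr_add[symmetric]) simp
  then have "th powr (1 - q) = th * th powr (- q)" using assms by simp
  then have "th powr (- q) * P - th powr (1 - q) * P = th powr (- q) * ((1 - th) powr 1 * P)"
    using assms by (simp add: algebra_simps)
  also have "\<dots> / (1 - th) powr (1 - q) = th powr (- q) * (1 - th) powr q * P"
  proof -
    have "(1 - th) powr q = (1 - th) powr 1 / (1 - th) powr (1 - q)" by (subst powr_diff[symmetric]) simp
    then show ?thesis by (simp add: times_divide_eq_left mult.assoc)
  qed
  also have "th powr (- q) * (1 - th) powr q = ((1 - th) / th) powr q"
    using assms by (simp add: powr_divide powr_minus divide_simps)
  also have "(1 - th) / th = 1 / th - 1" using assms by (simp add: field_simps)
  finally show ?thesis .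
qed

lemma ptw_enn2:
  fixes X Y Z R N al be :: real and c :: ennreal
  assumes h: "X \<le> al * Y + be * Z" and Y: "0 \<le> Y" and Z: "0 \<le> Z"
    and R: "0 \<le> R" and N: "0 \<le> N" and al: "0 \<le> al" and be: "0 \<le> be"
  shows "c * ennreal (R * X / N) \<le> ennreal al * (c * ennreal (R * Y / N)) + ennreal be * (c * ennreal (R * Z / N))"
proof -
  have RN: "0 \<le> R / N" using R N by simp
  have "R * X / N = (R / N) * X" by simp
  also have "\<dots> \<le> (R / N) * (al * Y + be * Z)"
    by (rule mult_left_mono[OF h RN])
  also have "\<dots> = al * (R * Y / N) + be * (R * Z / N)"
    by (simp add: algebra_simps)
  finally have r: "R * X / N \<le> al * (R * Y / N) + be * (R * Z / N)" .
  have n1: "0 \<le> R * Y / N" "0 \<le> R * Z / N" using R N Y Z by simp_all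
  have "ennreal (R * X / N) \<le> ennreal (al * (R * Y / N) + be * (R * Z / N))"
    by (rule ennreal_leI[OF r])
  also have "\<dots> = ennreal al * ennreal (R * Y / N) + ennreal be * ennreal (R * Z / N)"
    by (simp only: ennreal_plus[OF mult_nonneg_nonneg[OF al n1(1)] mult_nonneg_nonneg[OF be n1(2)]]
        ennreal_mult[OF al n1(1)] ennreal_mult[OF be n1(2)])
  finally have "c * ennreal (R * X / N) \<le> c * (ennreal al * ennreal (R * Y / N) + ennreal be * ennreal (R * Z / N))"
    by (rule mult_left_mono) simp
  also have "\<dots> = ennreal al * (c * ennreal (R * Y / N)) + ennreal be * (c * ennreal (R * Z / N))"
    by (simp add: algebra_simps)
  finally show ?thesis .
qed

lemma pull_const:
  fixes H :: "'a::euclidean_space \<Rightarrow> 'a \<Rightarrow> ennreal"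
  assumes hm: "case_prod H \<in> borel_measurable ((sphere_measure :: 'a measure) \<Otimes>\<^sub>M sphere_measure)"
  shows "c * (\<integral>\<^sup>+\<omega>. \<integral>\<^sup>+\<sigma>. H \<omega> \<sigma> \<partial>sphere_measure \<partial>sphere_measure) = (\<integral>\<^sup>+\<omega>. \<integral>\<^sup>+\<sigma>. c * H \<omega> \<sigma> \<partial>sphere_measure \<partial>(sphere_measure :: 'a measure))"
proof -
  have m1: "(\<lambda>\<omega>. \<integral>\<^sup>+\<sigma>. H \<omega> \<sigma> \<partial>(sphere_measure :: 'a measure)) \<in> borel_measurable (sphere_measure :: 'a measure)"
    by (rule sigma_finite_measure.borel_measurable_nn_integral[OF sf_S hm])
  have m2: "H \<omega> \<in> borel_measurable (sphere_measure :: 'a measure)" for \<omega>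
    using measurable_Pair2[OF hm, of \<omega>] by simp
  show ?thesis
    using nn_integral_cmult[OF m1, of c] nn_integral_cmult[OF m2, of c, symmetric] by simp
qed

theorem mainTheorem4:
  fixes u :: "'a::euclidean_space \<Rightarrow> real"
    and s p q \<gamma> t :: real and e :: 'a
  assumes "0 < s" "s < 1" "1 \<le> q" "1 \<le> p"
    and "e \<in> Basis"
    and "u \<in> borel_measurable lebesgue"
    and "(\<integral>\<^sup>+ x. ennreal (\<bar>u x\<bar> powr q * norm x powr (\<gamma> - real DIM('a))) \<partial>lebesgue) < \<infinity>"
    and "0 < t" "t \<noteq> 1"
  shows "(\<integral>\<^sup>+ r. indicator {0<..} r *
            (\<integral>\<^sup>+ \<omega>. (\<integral>\<^sup>+ \<sigma>.
               ennreal (r powr (\<gamma> - 1) * \<bar>u (r *\<^sub>R \<omega>) - u ((r * t) *\<^sub>R \<sigma>)\<bar> powr q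
                        / norm (\<omega> - t *\<^sub>R \<sigma>) powr (real DIM('a) + s * p))
             \<partial>sphere_measure) \<partial>sphere_measure) \<partial>lborel)
         \<ge> ennreal (\<bar>1 - t powr (- \<gamma> / q)\<bar> powr q) * Phi e s p t *
            (\<integral>\<^sup>+ x. ennreal (\<bar>u x\<bar> powr q * norm x powr (\<gamma> - real DIM('a))) \<partial>lebesgue)"
proof -
  note s0 = assms(1) and q1 = assms(3) and p1 = assms(4) and e = assms(5) and um = assms(6)
    and Ifin = assms(7) and t0 = assms(8) and t1 = assms(9)
  define E where "E = real DIM('a) + s * p"
  have E0: "0 \<le> E" unfolding E_def using s0 p1 by (simp add: add_nonneg_nonneg)
  obtain g where gm: "g \<in> borel_measurable lborel" and ae: "AE x in lborel. u x = g x"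
    using completion_ex_borel_measurable_real[OF um] by blast
  have g[measurable]: "g \<in> borel_measurable borel" using gm by simp
  obtain N where N1: "{x \<in> space lborel. \<not> u x = g x} \<subseteq> N" and N2: "emeasure lborel N = 0" and N3: "N \<in> sets lborel"
    using ae by (rule AE_E)
  have Nn: "N \<in> null_sets lborel" using N2 N3 by (simp add: null_setsI)
  have uN: "u x = g x" if "x \<notin> N" for x using N1 that by auto
  have Nb[measurable]: "N \<in> sets borel" using N3 by simp
  define N' where "N' = (\<lambda>y::'a. t *\<^sub>R y) -` N"
  have N'b[measurable]: "N' \<in> sets borel"
    unfolding N'_def using measurable_sets[of "\<lambda>y::'a. t *\<^sub>R y" borel borel N] by simp
  have N'n: "N' \<in> null_sets lborel"
  proof -
    have "0 = emeasure lborel N" using N2 by simp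
    also have "\<dots> = (\<integral>\<^sup>+x. indicator N x \<partial>lborel)" using N3 by simp
    also have "\<dots> = ennreal (\<bar>t\<bar> ^ DIM('a)) * (\<integral>\<^sup>+y. indicator N (t *\<^sub>R y) \<partial>lborel)"
      by (rule scale_nn) (use t0 in auto)
    also have "(\<integral>\<^sup>+y. indicator N (t *\<^sub>R y) \<partial>lborel) = (\<integral>\<^sup>+y. indicator N' y \<partial>(lborel :: 'a measure))"
      unfolding N'_def by (rule nn_integral_cong) (simp add: indicator_def)
    also have "\<dots> = emeasure lborel N'" using N'b by simp
    finally have "ennreal (\<bar>t\<bar> ^ DIM('a)) * emeasure lborel N' = 0" by simp
    then have "emeasure lborel N' = 0" using t0 by simp
    then show ?thesis using N'b by (simp add: null_setsI)
  qed
  have aeN: "AE r in lborel. 0 < r \<longrightarrow> (AE \<omega> in sphere_measure. r *\<^sub>R \<omega> \<notin> N) \<and> (AE \<sigma> in sphere_measure. r *\<^sub>R \<sigma> \<notin> N')"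
    by (rule eventually_mono[OF eventually_conj[OF null_slice[OF Nn] null_slice[OF N'n]]]) auto

  let ?S = "sphere_measure :: 'a measure"
  define Dg where "Dg r \<omega> \<sigma> = ennreal (r powr (\<gamma> - 1) * \<bar>g (r *\<^sub>R \<omega>) - g ((r * t) *\<^sub>R \<sigma>)\<bar> powr q
                        / norm (\<omega> - t *\<^sub>R \<sigma>) powr (real DIM('a) + s * p))" for r \<omega> \<sigma>
  define Du where "Du r \<omega> \<sigma> = ennreal (r powr (\<gamma> - 1) * \<bar>u (r *\<^sub>R \<omega>) - u ((r * t) *\<^sub>R \<sigma>)\<bar> powr q
                        / norm (\<omega> - t *\<^sub>R \<sigma>) powr (real DIM('a) + s * p))" for r \<omega> \<sigma>
  have ug: "(\<integral>\<^sup>+r. indicator {0<..} r * (\<integral>\<^sup>+\<omega>. \<integral>\<^sup>+\<sigma>. Dg r \<omega> \<sigma> \<partial>?S \<partial>?S) \<partial>lborel)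
      \<le> (\<integral>\<^sup>+r. indicator {0<..} r * (\<integral>\<^sup>+\<omega>. \<integral>\<^sup>+\<sigma>. Du r \<omega> \<sigma> \<partial>?S \<partial>?S) \<partial>lborel)"
  proof (rule nn_integral_mono_AE)
    show "AE r in lborel. indicator {0<..} r * (\<integral>\<^sup>+\<omega>. \<integral>\<^sup>+\<sigma>. Dg r \<omega> \<sigma> \<partial>?S \<partial>?S)
        \<le> indicator {0<..} r * (\<integral>\<^sup>+\<omega>. \<integral>\<^sup>+\<sigma>. Du r \<omega> \<sigma> \<partial>?S \<partial>?S)"
      using aeN
    proof (rule eventually_mono)
      fix r :: real
      assume hr: "0 < r \<longrightarrow> (AE \<omega> in ?S. r *\<^sub>R \<omega> \<notin> N) \<and> (AE \<sigma> in ?S. r *\<^sub>R \<sigma> \<notin> N')"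
      show "indicator {0<..} r * (\<integral>\<^sup>+\<omega>. \<integral>\<^sup>+\<sigma>. Dg r \<omega> \<sigma> \<partial>?S \<partial>?S)
        \<le> indicator {0<..} r * (\<integral>\<^sup>+\<omega>. \<integral>\<^sup>+\<sigma>. Du r \<omega> \<sigma> \<partial>?S \<partial>?S)"
      proof (cases "0 < r")
        case False then show ?thesis by simp
      next
        case True
        then have h1: "AE \<omega> in ?S. r *\<^sub>R \<omega> \<notin> N" and h2: "AE \<sigma> in ?S. r *\<^sub>R \<sigma> \<notin> N'" using hr by auto
        have "(\<integral>\<^sup>+\<omega>. \<integral>\<^sup>+\<sigma>. Dg r \<omega> \<sigma> \<partial>?S \<partial>?S) \<le> (\<integral>\<^sup>+\<omega>. \<integral>\<^sup>+\<sigma>. Du r \<omega> \<sigma> \<partial>?S \<partial>?S)"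
        proof (rule nn_integral_mono_AE)
          show "AE \<omega> in ?S. (\<integral>\<^sup>+\<sigma>. Dg r \<omega> \<sigma> \<partial>?S) \<le> (\<integral>\<^sup>+\<sigma>. Du r \<omega> \<sigma> \<partial>?S)"
            using h1
          proof (rule eventually_mono)
            fix \<omega> :: 'a assume w: "r *\<^sub>R \<omega> \<notin> N"
            have uw: "u (r *\<^sub>R \<omega>) = g (r *\<^sub>R \<omega>)" by (rule uN[OF w])
            show "(\<integral>\<^sup>+\<sigma>. Dg r \<omega> \<sigma> \<partial>?S) \<le> (\<integral>\<^sup>+\<sigma>. Du r \<omega> \<sigma> \<partial>?S)"
            proof (rule nn_integral_mono_AE)
              show "AE \<sigma> in ?S. Dg r \<omega> \<sigma> \<le> Du r \<omega> \<sigma>"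
                using h2
              proof (rule eventually_mono)
                fix \<sigma> :: 'a assume sg: "r *\<^sub>R \<sigma> \<notin> N'"
                have "(r * t) *\<^sub>R \<sigma> = t *\<^sub>R (r *\<^sub>R \<sigma>)" by (simp add: mult.commute)
                moreover have "t *\<^sub>R (r *\<^sub>R \<sigma>) \<notin> N" using sg unfolding N'_def by simp
                ultimately have "(r * t) *\<^sub>R \<sigma> \<notin> N" by (simp only: not_False_eq_True)
                then have us: "u ((r * t) *\<^sub>R \<sigma>) = g ((r * t) *\<^sub>R \<sigma>)" by (rule uN)
                show "Dg r \<omega> \<sigma> \<le> Du r \<omega> \<sigma>" unfolding Dg_def Du_def uw us by simp
              qed
            qed
          qed
        qed
        then show ?thesis by (rule mult_left_mono) simp
      qed
    qed
  qed
  have Ieq: "(\<integral>\<^sup>+ x. ennreal (\<bar>u x\<bar> powr q * norm x powr (\<gamma> - real DIM('a))) \<partial>lebesgue)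
      = (\<integral>\<^sup>+ x. ennreal (\<bar>g x\<bar> powr q * norm x powr (\<gamma> - real DIM('a))) \<partial>lborel)"
    unfolding nn_integral_completion
    by (rule nn_integral_cong_AE) (rule eventually_mono[OF ae], simp)
  define I where "I = (\<integral>\<^sup>+ x. ennreal (\<bar>g x\<bar> powr q * norm x powr (\<gamma> - real DIM('a))) \<partial>lborel)"
  define J where "J = (\<integral>\<^sup>+r. indicator {0<..} r * (\<integral>\<^sup>+\<omega>. ennreal (r powr (\<gamma> - 1) * \<bar>g (r *\<^sub>R \<omega>)\<bar> powr q) \<partial>?S) \<partial>lborel)"
  have JI: "J = I" unfolding J_def I_def by (rule J_eq_I[OF g])
  have Ifin': "I < \<infinity>" using Ifin unfolding Ieq I_def .
  have Phifin: "Phi e s p t < \<infinity>"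
    by (rule Phi_finite[OF e t1 t0]) (use E0 in \<open>simp add: E_def\<close>)
  obtain i where i: "I = ennreal i" "0 \<le> i" using Ifin' by (cases I) auto
  obtain ph where ph: "Phi e s p t = ennreal ph" "0 \<le> ph" using Phifin by (cases "Phi e s p t") auto
  define P where "P = ph * i"
  have P0: "0 \<le> P" unfolding P_def using ph i by simp
  define Ag where "Ag r \<omega> \<sigma> = ennreal (r powr (\<gamma> - 1) * \<bar>g (r *\<^sub>R \<omega>)\<bar> powr q
                        / norm (\<omega> - t *\<^sub>R \<sigma>) powr (real DIM('a) + s * p))" for r \<omega> \<sigma>
  define Bg where "Bg r \<omega> \<sigma> = ennreal (r powr (\<gamma> - 1) * \<bar>g ((r * t) *\<^sub>R \<sigma>)\<bar> powr q
                        / norm (\<omega> - t *\<^sub>R \<sigma>) powr (real DIM('a) + s * p))" for r \<omega> \<sigma>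
  define ID where "ID r \<omega> \<sigma> = indicator {0<..} r * Dg r \<omega> \<sigma>" for r \<omega> \<sigma>
  define IA where "IA r \<omega> \<sigma> = indicator {0<..} r * Ag r \<omega> \<sigma>" for r \<omega> \<sigma>
  define IB where "IB r \<omega> \<sigma> = indicator {0<..} r * Bg r \<omega> \<sigma>" for r \<omega> \<sigma>
  have mD: "(\<lambda>x. ID (fst x) (fst (snd x)) (snd (snd x))) \<in> borel_measurable (lborel \<Otimes>\<^sub>M (?S \<Otimes>\<^sub>M ?S))"
    unfolding ID_def Dg_def by measurable
  have mA: "(\<lambda>x. IA (fst x) (fst (snd x)) (snd (snd x))) \<in> borel_measurable (lborel \<Otimes>\<^sub>M (?S \<Otimes>\<^sub>M ?S))"
    unfolding IA_def Ag_def by measurable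
  have mB: "(\<lambda>x. IB (fst x) (fst (snd x)) (snd (snd x))) \<in> borel_measurable (lborel \<Otimes>\<^sub>M (?S \<Otimes>\<^sub>M ?S))"
    unfolding IB_def Bg_def by measurable
  define TD where "TD = (\<integral>\<^sup>+r. \<integral>\<^sup>+\<omega>. \<integral>\<^sup>+\<sigma>. ID r \<omega> \<sigma> \<partial>?S \<partial>?S \<partial>lborel)"
  define TA where "TA = (\<integral>\<^sup>+r. \<integral>\<^sup>+\<omega>. \<integral>\<^sup>+\<sigma>. IA r \<omega> \<sigma> \<partial>?S \<partial>?S \<partial>lborel)"
  define TB where "TB = (\<integral>\<^sup>+r. \<integral>\<^sup>+\<omega>. \<integral>\<^sup>+\<sigma>. IB r \<omega> \<sigma> \<partial>?S \<partial>?S \<partial>lborel)"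
  have LHSg: "(\<integral>\<^sup>+r. indicator {0<..} r * (\<integral>\<^sup>+\<omega>. \<integral>\<^sup>+\<sigma>. Dg r \<omega> \<sigma> \<partial>?S \<partial>?S) \<partial>lborel) = TD"
    unfolding TD_def ID_def
  proof (rule nn_integral_cong)
    fix r :: real
    have "case_prod (Dg r) \<in> borel_measurable (?S \<Otimes>\<^sub>M ?S)" unfolding Dg_def by measurable
    then show "indicator {0<..} r * (\<integral>\<^sup>+\<omega>. \<integral>\<^sup>+\<sigma>. Dg r \<omega> \<sigma> \<partial>?S \<partial>?S) =
        (\<integral>\<^sup>+\<omega>. \<integral>\<^sup>+\<sigma>. indicator {0<..} r * Dg r \<omega> \<sigma> \<partial>?S \<partial>?S)"
      by (rule pull_const)
  qed
  have TAv: "TA = ennreal P"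
  proof -
    have "TA = Phi e s p t * J" unfolding TA_def IA_def Ag_def J_def by (rule A_eq[OF g e])
    then show ?thesis unfolding JI i ph P_def by (simp add: ennreal_mult ph i)
  qed
  have TBv: "TB = ennreal (t powr (- \<gamma>) * P)"
  proof -
    have "TB = ennreal (t powr (- \<gamma>)) * Phi e s p t * J" unfolding TB_def IB_def Bg_def J_def by (rule B_eq[OF g e t0])
    then show ?thesis unfolding JI i ph P_def by (simp add: ennreal_mult ph i mult.assoc)
  qed
  define th0 where "th0 = t powr (- \<gamma> / q)"
  have th0pos: "0 < th0" unfolding th0_def using t0 by simp
  have q0: "q \<noteq> 0" using q1 by simp
  have th0q: "th0 powr q = t powr (- \<gamma>)" unfolding th0_def using t0 q0 by (simp add: powr_powr)
  have RHS: "ennreal (\<bar>1 - t powr (- \<gamma> / q)\<bar> powr q) * Phi e s p t *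
            (\<integral>\<^sup>+ x. ennreal (\<bar>u x\<bar> powr q * norm x powr (\<gamma> - real DIM('a))) \<partial>lebesgue)
      = ennreal (\<bar>1 - th0\<bar> powr q * P)"
    unfolding Ieq I_def[symmetric] i ph P_def th0_def by (simp add: ennreal_mult mult.assoc ph i)
  have main: "ennreal (\<bar>1 - th0\<bar> powr q * P) \<le> TD"
  proof -
    consider "th0 = 1" | "th0 < 1" | "1 < th0" by linarith
    then show ?thesis
    proof cases
      case 1 then show ?thesis by simp
    next
      case 2
      define al where "al = (1 - th0) powr (1 - q)"
      define be where "be = th0 powr (1 - q)"
      have al0: "0 < al" unfolding al_def using 2 by simp
      have be0: "0 \<le> be" unfolding be_def by simp
      have "TA \<le> ennreal al * TD + ennreal be * TB"
        unfolding TA_def TD_def TB_def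
      proof (rule combine[OF mA mD mB])
        fix r \<omega> \<sigma>
        show "IA r \<omega> \<sigma> \<le> ennreal al * ID r \<omega> \<sigma> + ennreal be * IB r \<omega> \<sigma>"
          unfolding IA_def ID_def IB_def Ag_def Dg_def Bg_def
          by (rule ptw_enn2) (use ptwise[OF th0pos 2 q1, of "g (r *\<^sub>R \<omega>)" "g ((r * t) *\<^sub>R \<sigma>)"] al0 be0 in
              \<open>simp_all add: al_def be_def\<close>)
      qed
      then have "ennreal P \<le> ennreal al * TD + ennreal (be * (t powr (- \<gamma>) * P))"
        unfolding TAv TBv using be0 P0 by (simp add: ennreal_mult)
      then have "ennreal ((P - be * (t powr (- \<gamma>) * P)) / al) \<le> TD"
        by (rule ennreal_solve[OF _ al0]) (use be0 P0 in simp)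
      also have "(P - be * (t powr (- \<gamma>) * P)) / al = (1 - th0) powr q * P"
        using arith1[OF th0pos 2, where q=q and P=P] unfolding al_def be_def th0q[symmetric] by (simp add: mult_ac)
      finally show ?thesis using 2 by simp
    next
      case 3
      define th where "th = t powr (\<gamma> / q)"
      have thpos: "0 < th" unfolding th_def using t0 by simp
      have th0th: "th0 = 1 / th" unfolding th0_def th_def using t0 by (simp add: powr_minus_divide)
      have th1: "th < 1" using 3 thpos unfolding th0th by (simp add: field_simps)
      have thq: "th powr (- q) = t powr (- \<gamma>)" unfolding th_def using t0 q0 by (simp add: powr_powr)
      define al where "al = (1 - th) powr (1 - q)"
      define be where "be = th powr (1 - q)"
      have al0: "0 < al" unfolding al_def using th1 by simp
      have be0: "0 \<le> be" unfolding be_def by simp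
      have "TB \<le> ennreal al * TD + ennreal be * TA"
        unfolding TA_def TD_def TB_def
      proof (rule combine[OF mB mD mA])
        fix r \<omega> \<sigma>
        have h: "\<bar>g ((r * t) *\<^sub>R \<sigma>)\<bar> powr q \<le> al * \<bar>g (r *\<^sub>R \<omega>) - g ((r * t) *\<^sub>R \<sigma>)\<bar> powr q + be * \<bar>g (r *\<^sub>R \<omega>)\<bar> powr q"
          using ptwise[OF thpos th1 q1, of "g ((r * t) *\<^sub>R \<sigma>)" "g (r *\<^sub>R \<omega>)"]
          unfolding al_def be_def by (simp add: abs_minus_commute)
        show "IB r \<omega> \<sigma> \<le> ennreal al * ID r \<omega> \<sigma> + ennreal be * IA r \<omega> \<sigma>"
          unfolding IA_def ID_def IB_def Ag_def Dg_def Bg_def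
          by (rule ptw_enn2[OF h]) (use al0 be0 in simp_all)
      qed
      then have "ennreal (t powr (- \<gamma>) * P) \<le> ennreal al * TD + ennreal (be * P)"
        unfolding TAv TBv using be0 P0 by (simp add: ennreal_mult)
      then have "ennreal ((t powr (- \<gamma>) * P - be * P) / al) \<le> TD"
        by (rule ennreal_solve[OF _ al0]) (use be0 P0 in simp)
      also have "(t powr (- \<gamma>) * P - be * P) / al = (1 / th - 1) powr q * P"
        using arith2[OF thpos th1, where q=q and P=P] unfolding al_def be_def thq by simp
      also have "1 / th - 1 = \<bar>1 - th0\<bar>" using 3 unfolding th0th by simp
      finally show ?thesis .
    qed
  qed
  have "ennreal (\<bar>1 - th0\<bar> powr q * P) \<le> (\<integral>\<^sup>+r. indicator {0<..} r * (\<integral>\<^sup>+\<omega>. \<integral>\<^sup>+\<sigma>. Du r \<omega> \<sigma> \<partial>?S \<partial>?S) \<partial>lborel)"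
    using main LHSg ug by simp
  then show ?thesis unfolding RHS Du_def by simp
qed


end
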